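(* Let a positive, anchored hidden Markov model with multiple observation processes be given, together with a (measurable) policy $g:\mathcal P(S)\to O$. Suppose the restricted information chain $F|_R$ is irreducible and aperiodic. Then the information state $Z_t$ converges in distribution (for any initial law of $Z_0$) to some discrete invariant measure $\mu_\infty\in\mathcal P(R)\subset\mathcal P(\mathcal P(S))$.
   Context: Model: $(X_t)_{t\ge0}$ is a time-homogeneous Markov chain on the finite state space $S=\{1,\dots,n\}$ with transition matrix $T$, $T_{ij}=\mathbb P(X_{t+1}=j\mid X_t=i)$. $O$ is a finite index set; for each $i\in O$, $(Y^{(i)}_t)$ is an observation process with values in $V=\{1,\dots,m\}$ and observation matrix $M^{(i)}$ ($n\times m$), $M^{(i)}_{jk}=\mathbb P(Y^{(i)}_t=k\mid X_t=j)$; observations depend only on the current state (conditionally independent of past states and observations given $X_t$), and $X_{t+1}$ is conditionally independent of the past states and all observations up to time $t$ given $X_t$. $\mathcal P(S)=\{z\in\mathbb R^n: z_j\ge0,\ \sum_j z_j=1\}$, $\delta(x)\in\mathcal P(S)$ is the point mass at $x$, and $\mathcal P(\mathcal P(S))$ is the set of Radon probability measures on $\mathcal P(S)$. A policy is a function $g:\mathcal P(S)\to O$; $A_i=g^{-1}\{i\}$. The observation index is $I_0$ fixed and $I_{t+1}=g(Z_t)$, the actual observation is $Y_t=Y^{(I_t)}_t$, and the information state is $Z_t=\mathbb P(X_t\mid Y_0,\dots,Y_t,I_0,\dots,I_t)\in\mathcal P(S)$ (posterior distribution). For $i\in O$, $y\in V$, $z\in\mathcal P(S)$ define $\alpha_{i,y}(z)=(z\,T\,M^{(i)})_y=\sum_{j,x}z_jT_{j,x}M^{(i)}_{x,y}$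 and, when $\alpha_{i,y}(z)>0$, $r_{i,y}(z)=\frac{\sum_{x,j}M^{(i)}_{x,y}T_{j,x}z_j\,\delta(x)}{\sum_{x,j}M^{(i)}_{x,y}T_{j,x}z_j}\in\mathcal P(S)$. The transition function is $F(\mu)=\sum_{i\in O}\sum_{y\in V}\int_{A_i}\alpha_{i,y}(z)\,\delta_{r_{i,y}(z)}\,d\mu(z)$ (terms with $\alpha_{i,y}(z)=0$ contribute zero); the law $\mu_t$ of $Z_t$ satisfies $\mu_{t+1}=F(\mu_t)$. The model is positive if all entries of $T$ are strictly positive. It is anchored if $(X_t)$ is ergodic (irreducible, aperiodic, positive recurrent) and for each $i\in O$ there are $x_i\in S$, $y_i\in V$ with $M^{(i)}_{x_i,y_i}>0$ and $M^{(i)}_{x,y_i}=0$ for all $x\ne x_i$. For $x\in S$, the orbit $R_x$ is the set consisting of $\delta(x)$ and all points $r_{i_k,y_k}\circ\cdots\circ r_{i_1,y_1}(\delta(x))$ ($k\ge1$, $i_j\in O$, $y_j\in V$) such that every $\alpha$-value along the way is positive, i.e. $\alpha_{i_{j+1},y_{j+1}}(r_{i_j,y_j}\circ\cdots\circ r_{i_1,y_1}(\delta(x)))>0$ for $j=0,\dots,k-1$. Let $R=\bigcup_{x\in S}R_x$ (a countable set). The restricted information chain $F|_R$ is the Markov chain on $R$ which from $z$ moves to $r_{g(z),y}(z)$ with probability $\alpha_{g(z),y}(z)$, $y\in V$. *)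

theory Defs
  imports "HOL-Probability.Probability"
begin

text \<open>State space S is a finite type 'x, observation values V a finite type 'v,
  observation-process indices O a finite type 'o.
  T x x' = P(X_{t+1} = x' | X_t = x); M i x y = P(Y^(i)_t = y | X_t = x).
  Information states are vectors z :: real^'x.\<close>

definition stochastic_model :: "('x::finite \<Rightarrow> 'x \<Rightarrow> real) \<Rightarrow> ('o::finite \<Rightarrow> 'x \<Rightarrow> 'v::finite \<Rightarrow> real) \<Rightarrow> bool" where
  "stochastic_model T M \<longleftrightarrow>
     (\<forall>i j. 0 \<le> T i j) \<and> (\<forall>i. (\<Sum>j\<in>UNIV. T i j) = 1) \<and>
     (\<forall>i x y. 0 \<le> M i x y) \<and> (\<forall>i x. (\<Sum>y\<in>UNIV. M i x y) = 1)"

fun matpow :: "('x::finite \<Rightarrow> 'x \<Rightarrow> real) \<Rightarrow> nat \<Rightarrow> 'x \<Rightarrow> 'x \<Rightarrow> real" where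
  "matpow T 0 = (\<lambda>i j. if i = j then 1 else 0)"
| "matpow T (Suc k) = (\<lambda>i j. \<Sum>l\<in>UNIV. T i l * matpow T k l j)"

definition positive_model :: "('x::finite \<Rightarrow> 'x \<Rightarrow> real) \<Rightarrow> bool" where
  "positive_model T \<longleftrightarrow> (\<forall>i j. 0 < T i j)"

text \<open>Ergodic finite chain: irreducible and aperiodic (positive recurrence is automatic).\<close>
definition ergodic_chain :: "('x::finite \<Rightarrow> 'x \<Rightarrow> real) \<Rightarrow> bool" where
  "ergodic_chain T \<longleftrightarrow>
     (\<forall>i j. \<exists>k. 0 < matpow T k i j) \<and>
     (\<forall>i. Gcd {k. 0 < k \<and> 0 < matpow T k i i} = 1)"

definition anchored_model :: "('x::finite \<Rightarrow> 'x \<Rightarrow> real) \<Rightarrow> ('o::finite \<Rightarrow> 'x \<Rightarrow> 'v::finite \<Rightarrow> real) \<Rightarrow> bool" where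
  "anchored_model T M \<longleftrightarrow> ergodic_chain T \<and>
     (\<forall>i. \<exists>xi yi. 0 < M i xi yi \<and> (\<forall>x. x \<noteq> xi \<longrightarrow> M i x yi = 0))"

definition PS :: "(real^'x::finite) set" where
  "PS = {z. (\<forall>j. 0 \<le> z $ j) \<and> (\<Sum>j\<in>UNIV. z $ j) = 1}"

definition PSM :: "(real^'x::finite) measure" where
  "PSM = restrict_space borel PS"

definition delta :: "'x::finite \<Rightarrow> real^'x" where
  "delta x = (\<chi> j. if j = x then 1 else 0)"

definition alpha :: "('x::finite \<Rightarrow> 'x \<Rightarrow> real) \<Rightarrow> ('o::finite \<Rightarrow> 'x \<Rightarrow> 'v::finite \<Rightarrow> real)
    \<Rightarrow> 'o \<Rightarrow> 'v \<Rightarrow> real^'x \<Rightarrow> real" where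
  "alpha T M i y z = (\<Sum>j\<in>UNIV. \<Sum>x\<in>UNIV. z $ j * T j x * M i x y)"

definition rmap :: "('x::finite \<Rightarrow> 'x \<Rightarrow> real) \<Rightarrow> ('o::finite \<Rightarrow> 'x \<Rightarrow> 'v::finite \<Rightarrow> real)
    \<Rightarrow> 'o \<Rightarrow> 'v \<Rightarrow> real^'x \<Rightarrow> real^'x" where
  "rmap T M i y z = (1 / alpha T M i y z) *\<^sub>R (\<Sum>x\<in>UNIV. (\<Sum>j\<in>UNIV. M i x y * T j x * z $ j) *\<^sub>R delta x)"

definition Ftrans :: "('x::finite \<Rightarrow> 'x \<Rightarrow> real) \<Rightarrow> ('o::finite \<Rightarrow> 'x \<Rightarrow> 'v::finite \<Rightarrow> real)
    \<Rightarrow> (real^'x \<Rightarrow> 'o) \<Rightarrow> (real^'x) measure \<Rightarrow> (real^'x) measure" where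
  "Ftrans T M g \<mu> = measure_of PS (sets PSM)
     (\<lambda>B. \<Sum>i\<in>UNIV. \<Sum>y\<in>UNIV.
        set_nn_integral \<mu> (g -` {i} \<inter> PS)
          (\<lambda>z. ennreal (alpha T M i y z) * indicator B (rmap T M i y z)))"

inductive_set orbit :: "('x::finite \<Rightarrow> 'x \<Rightarrow> real) \<Rightarrow> ('o::finite \<Rightarrow> 'x \<Rightarrow> 'v::finite \<Rightarrow> real)
    \<Rightarrow> 'x \<Rightarrow> (real^'x) set" for T M x where
  base: "delta x \<in> orbit T M x"
| step: "z \<in> orbit T M x \<Longrightarrow> 0 < alpha T M i y z \<Longrightarrow> rmap T M i y z \<in> orbit T M x"

definition Rset :: "('x::finite \<Rightarrow> 'x \<Rightarrow> real) \<Rightarrow> ('o::finite \<Rightarrow> 'x \<Rightarrow> 'v::finite \<Rightarrow> real) \<Rightarrow> (real^'x) set" where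
  "Rset T M = (\<Union>x\<in>UNIV. orbit T M x)"

text \<open>k-step transition probabilities of the restricted information chain F|_R:
  from z it moves to r_{g(z),y}(z) with probability alpha_{g(z),y}(z).\<close>
fun rpow :: "('x::finite \<Rightarrow> 'x \<Rightarrow> real) \<Rightarrow> ('o::finite \<Rightarrow> 'x \<Rightarrow> 'v::finite \<Rightarrow> real)
    \<Rightarrow> (real^'x \<Rightarrow> 'o) \<Rightarrow> nat \<Rightarrow> real^'x \<Rightarrow> real^'x \<Rightarrow> real" where
  "rpow T M g 0 z w = (if z = w then 1 else 0)"
| "rpow T M g (Suc k) z w =
     (\<Sum>y\<in>{y. 0 < alpha T M (g z) y z}. alpha T M (g z) y z * rpow T M g k (rmap T M (g z) y z) w)"

definition restricted_irreducible :: "('x::finite \<Rightarrow> 'x \<Rightarrow> real) \<Rightarrow> ('o::finite \<Rightarrow> 'x \<Rightarrow> 'v::finite \<Rightarrow> real)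
    \<Rightarrow> (real^'x \<Rightarrow> 'o) \<Rightarrow> bool" where
  "restricted_irreducible T M g \<longleftrightarrow>
     (\<forall>z\<in>Rset T M. \<forall>w\<in>Rset T M. \<exists>k. 0 < rpow T M g k z w)"

definition restricted_aperiodic :: "('x::finite \<Rightarrow> 'x \<Rightarrow> real) \<Rightarrow> ('o::finite \<Rightarrow> 'x \<Rightarrow> 'v::finite \<Rightarrow> real)
    \<Rightarrow> (real^'x \<Rightarrow> 'o) \<Rightarrow> bool" where
  "restricted_aperiodic T M g \<longleftrightarrow>
     (\<forall>z\<in>Rset T M. Gcd {k. 0 < k \<and> 0 < rpow T M g k z z} = 1)"

definition prob_on_PS :: "(real^'x::finite) measure \<Rightarrow> bool" where
  "prob_on_PS \<mu> \<longleftrightarrow> sets \<mu> = sets PSM \<and> prob_space \<mu>"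

definition weak_conv_PS :: "(nat \<Rightarrow> (real^'x::finite) measure) \<Rightarrow> (real^'x) measure \<Rightarrow> bool" where
  "weak_conv_PS \<mu>s \<mu> \<longleftrightarrow>
     (\<forall>f :: real^'x \<Rightarrow> real. continuous_on PS f \<longrightarrow>
        (\<lambda>t. \<integral>z. f z \<partial>(\<mu>s t)) \<longlonglongrightarrow> (\<integral>z. f z \<partial>\<mu>))"

end

theory Submission
  imports Defs
begin

lemma semigroup_mult_mem:
  fixes S :: "nat set"
  assumes add: "\<And>a b. a \<in> S \<Longrightarrow> b \<in> S \<Longrightarrow> a + b \<in> S" and a: "a \<in> S" and k: "1 \<le> k"
  shows "k * a \<in> S"
  using k
proof (induction k)
  case 0 then show ?case by simp
next
  case (Suc k)
  show ?case
  proof (cases "k = 0")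
    case True then show ?thesis using a by simp
  next
    case False
    then have "k * a \<in> S" using Suc by simp
    then show ?thesis using add[OF a \<open>k * a \<in> S\<close>] by simp
  qed
qed

lemma semigroup_eventually:
  fixes S :: "nat set"
  assumes add: "\<And>a b. a \<in> S \<Longrightarrow> b \<in> S \<Longrightarrow> a + b \<in> S"
    and gcd: "Gcd S = 1" and nz: "0 \<notin> S"
  shows "\<exists>N. \<forall>n\<ge>N. n \<in> S"
proof -
  have "S \<noteq> {}" using gcd by auto
  then obtain s0 where s0: "s0 \<in> S" by auto
  define D where "D = {d. 0 < d \<and> (\<exists>s\<in>S. s + d \<in> S)}"
  have "s0 \<in> D" using s0 nz add[OF s0 s0] unfolding D_def by (cases s0) (auto intro!: bexI[of _ s0])
  define d where "d = (LEAST d. d \<in> D)"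
  have dD: "d \<in> D" unfolding d_def using \<open>s0 \<in> D\<close> by (rule LeastI)
  have dmin: "\<And>e. e \<in> D \<Longrightarrow> d \<le> e" unfolding d_def by (rule Least_le)
  obtain s where s: "s \<in> S" "s + d \<in> S" and d0: "0 < d" using dD unfolding D_def by auto
  have d1: "d = 1"
  proof (rule ccontr)
    assume "d \<noteq> 1"
    have "\<exists>u\<in>S. \<not> d dvd u"
    proof (rule ccontr)
      assume "\<not> ?thesis"
      then have "d dvd Gcd S" by (auto intro: Gcd_greatest)
      then show False using gcd \<open>d \<noteq> 1\<close> by simp
    qed
    then obtain u where u: "u \<in> S" "\<not> d dvd u" by auto
    define q where "q = u div d"
    define r where "r = u mod d"
    have r0: "0 < r" "r < d" using u d0 by (auto simp: r_def dvd_eq_mod_eq_0)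
    have ud: "u = q * d + r" by (simp add: q_def r_def)
    have A: "(Suc q) * s + u \<in> S"
      using add[OF semigroup_mult_mem[OF add s(1), of "Suc q"] u(1)] by simp
    have B: "(Suc q) * (s + d) \<in> S"
      using semigroup_mult_mem[OF add s(2), of "Suc q"] by simp
    have eq: "(Suc q) * (s + d) = ((Suc q) * s + u) + (d - r)"
      using ud r0 by (simp add: algebra_simps)
    have "d - r \<in> D" unfolding D_def using A B eq r0 by (intro CollectI conjI) (auto intro!: bexI[of _ "(Suc q) * s + u"])
    then have "d \<le> d - r" by (rule dmin)
    then show False using r0 by simp
  qed
  have sp: "0 < s" using s nz by (cases s) auto
  show ?thesis
  proof (intro exI allI impI)
    fix n assume n: "s * s \<le> n"
    define q where "q = n div s"
    define r where "r = n mod s"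
    have rs: "r < s" using sp by (simp add: r_def)
    have qs: "s \<le> q" using n sp unfolding q_def by (simp add: div_le_mono2 less_eq_div_iff_mult_less_eq mult.commute)
    have neq: "n = (q - r) * s + r * (s + 1)"
      using rs qs by (simp add: q_def r_def algebra_simps diff_mult_distrib) 
    have m1: "(q - r) * s \<in> S" using semigroup_mult_mem[OF add s(1)] rs qs by simp
    show "n \<in> S"
    proof (cases "r = 0")
      case True then show ?thesis using m1 neq by simp
    next
      case False
      have "r * (s + 1) \<in> S" using semigroup_mult_mem[OF add, of "s + 1" r] s(2) d1 False by simp
      then show ?thesis using add[OF m1] neq by simp
    qed
  qed
qed

lemma vec_sum_delta: "(\<Sum>x\<in>UNIV. c x *\<^sub>R delta x) $ k = (c k :: real)"
  by (simp add: delta_def if_distrib cong: if_cong)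

lemma delta_PS: "delta x \<in> PS"
  by (simp add: PS_def delta_def)

locale hmm =
  fixes T :: "'x::finite \<Rightarrow> 'x \<Rightarrow> real"
    and M :: "'o::finite \<Rightarrow> 'x \<Rightarrow> 'v::finite \<Rightarrow> real"
    and g :: "real^'x \<Rightarrow> 'o"
  assumes stoch: "stochastic_model T M"
    and pos: "positive_model T"
    and anch: "anchored_model T M"
    and gmeas: "g \<in> measurable PSM (count_space UNIV)"
    and irr: "restricted_irreducible T M g"
    and aper: "restricted_aperiodic T M g"
begin

lemma T_nonneg: "0 \<le> T i j" and T_sum: "(\<Sum>j\<in>UNIV. T i j) = 1"
  and M_nonneg: "0 \<le> M a x y" and M_sum: "(\<Sum>y\<in>UNIV. M a x y) = 1"
  using stoch by (auto simp: stochastic_model_def)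

lemma T_pos: "0 < T i j" using pos by (simp add: positive_model_def)

lemma PS_nonneg: "z \<in> PS \<Longrightarrow> 0 \<le> z $ j" and PS_sum: "z \<in> PS \<Longrightarrow> (\<Sum>j\<in>UNIV. z $ j) = 1"
  by (auto simp: PS_def)

lemma alpha_nonneg: "z \<in> PS \<Longrightarrow> 0 \<le> alpha T M i y z"
  unfolding alpha_def by (intro sum_nonneg mult_nonneg_nonneg) (auto simp: PS_nonneg T_nonneg M_nonneg)

lemma alpha_sum: assumes "z \<in> PS" shows "(\<Sum>y\<in>UNIV. alpha T M i y z) = 1"
proof -
  have "(\<Sum>y\<in>UNIV. alpha T M i y z) = (\<Sum>j\<in>UNIV. \<Sum>y\<in>UNIV. \<Sum>x\<in>UNIV. z $ j * T j x * M i x y)"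
    unfolding alpha_def by (rule sum.swap)
  also have "\<dots> = (\<Sum>j\<in>UNIV. \<Sum>x\<in>UNIV. \<Sum>y\<in>UNIV. z $ j * T j x * M i x y)"
    by (intro sum.cong refl) (rule sum.swap)
  also have "\<dots> = (\<Sum>j\<in>UNIV. \<Sum>x\<in>UNIV. z $ j * T j x * (\<Sum>y\<in>UNIV. M i x y))"
    by (simp add: sum_distrib_left)
  also have "\<dots> = (\<Sum>j\<in>UNIV. z $ j * (\<Sum>x\<in>UNIV. T j x))"
    by (simp add: M_sum sum_distrib_left)
  also have "\<dots> = 1" using assms by (simp add: T_sum PS_sum)
  finally show ?thesis .
qed

lemma rmap_comp: "rmap T M i y z $ k = (\<Sum>j\<in>UNIV. M i k y * T j k * z $ j) / alpha T M i y z"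
  unfolding rmap_def vector_scaleR_component vec_sum_delta by simp

lemma rmap_PS: assumes "z \<in> PS" "0 < alpha T M i y z" shows "rmap T M i y z \<in> PS"
proof -
  have "0 \<le> rmap T M i y z $ k" for k
    unfolding rmap_comp using assms
    by (intro divide_nonneg_pos sum_nonneg mult_nonneg_nonneg) (auto simp: PS_nonneg T_nonneg M_nonneg)
  moreover have "(\<Sum>k\<in>UNIV. rmap T M i y z $ k) = 1"
  proof -
    have "(\<Sum>k\<in>UNIV. rmap T M i y z $ k) = (\<Sum>k\<in>UNIV. \<Sum>j\<in>UNIV. M i k y * T j k * z $ j) / alpha T M i y z"
      unfolding rmap_comp by (simp add: sum_divide_distrib)
    also have "(\<Sum>k\<in>UNIV. \<Sum>j\<in>UNIV. M i k y * T j k * z $ j) = alpha T M i y z"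
      unfolding alpha_def by (subst sum.swap) (simp add: algebra_simps)
    finally show ?thesis using assms by simp
  qed
  ultimately show ?thesis by (simp add: PS_def)
qed

lemma orbit_PS: "z \<in> orbit T M x \<Longrightarrow> z \<in> PS"
  by (induction rule: orbit.induct) (auto simp: delta_PS rmap_PS)

lemma Rset_PS: "Rset T M \<subseteq> PS"
  by (auto simp: Rset_def orbit_PS)

lemma Rset_step: "z \<in> Rset T M \<Longrightarrow> 0 < alpha T M i y z \<Longrightarrow> rmap T M i y z \<in> Rset T M"
  by (auto simp: Rset_def intro: orbit.step)

lemma delta_Rset: "delta x \<in> Rset T M"
  by (auto simp: Rset_def intro: orbit.base)

end

context hmm begin

definition Pop :: "(real^'x \<Rightarrow> real) \<Rightarrow> real^'x \<Rightarrow> real" where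
  "Pop h z = (\<Sum>y\<in>{y. 0 < alpha T M (g z) y z}. alpha T M (g z) y z * h (rmap T M (g z) y z))"

lemma Pop_mono: "(\<And>w. h w \<le> h' w) \<Longrightarrow> Pop h z \<le> Pop h' z"
  unfolding Pop_def by (intro sum_mono mult_left_mono) auto

lemma Pop_mono_PS: "z \<in> PS \<Longrightarrow> (\<And>w. w \<in> PS \<Longrightarrow> h w \<le> h' w) \<Longrightarrow> Pop h z \<le> Pop h' z"
  unfolding Pop_def by (intro sum_mono mult_left_mono) (auto simp: rmap_PS)

lemma Pop_cong_PS: "z \<in> PS \<Longrightarrow> (\<And>w. w \<in> PS \<Longrightarrow> h w = h' w) \<Longrightarrow> Pop h z = Pop h' z"
  unfolding Pop_def by (intro sum.cong) (auto simp: rmap_PS)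

lemma Pop_lin: "Pop (\<lambda>w. a * h w + b * h' w) z = a * Pop h z + b * Pop h' z"
  unfolding Pop_def by (simp add: sum.distrib sum_distrib_left algebra_simps)

lemma Pop_const: assumes "z \<in> PS" shows "Pop (\<lambda>_. c) z = c"
proof -
  have "(\<Sum>y\<in>{y. 0 < alpha T M (g z) y z}. alpha T M (g z) y z) = (\<Sum>y\<in>UNIV. alpha T M (g z) y z)"
    using alpha_nonneg[OF assms] by (intro sum.mono_neutral_left) (auto simp: less_le)
  then show ?thesis using alpha_sum[OF assms] unfolding Pop_def by (simp add: sum_distrib_right[symmetric])
qed

lemma Popk_mono: "(\<And>w. h w \<le> h' w) \<Longrightarrow> (Pop^^k) h z \<le> (Pop^^k) h' z"
  by (induction k arbitrary: z) (auto intro: Pop_mono)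

lemma Popk_mono_PS: "z \<in> PS \<Longrightarrow> (\<And>w. w \<in> PS \<Longrightarrow> h w \<le> h' w) \<Longrightarrow> (Pop^^k) h z \<le> (Pop^^k) h' z"
  by (induction k arbitrary: z) (auto intro: Pop_mono_PS)

lemma Popk_cong_PS: "z \<in> PS \<Longrightarrow> (\<And>w. w \<in> PS \<Longrightarrow> h w = h' w) \<Longrightarrow> (Pop^^k) h z = (Pop^^k) h' z"
  by (induction k arbitrary: z) (auto intro: Pop_cong_PS)

lemma Popk_lin: "(Pop^^k) (\<lambda>w. a * h w + b * h' w) = (\<lambda>z. a * (Pop^^k) h z + b * (Pop^^k) h' z)"
  by (induction k) (auto simp: Pop_lin)

lemma Popk_const: "z \<in> PS \<Longrightarrow> (Pop^^k) (\<lambda>_. c) z = c"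
proof (induction k arbitrary: z)
  case (Suc k)
  have "(Pop^^Suc k) (\<lambda>_. c) z = Pop ((Pop^^k) (\<lambda>_. c)) z" by simp
  also have "\<dots> = Pop (\<lambda>_. c) z" using Suc by (intro Pop_cong_PS) auto
  finally show ?case using Pop_const[OF Suc.prems] by simp
qed simp

lemma Popk_affine: assumes "z \<in> PS" shows "(Pop^^k) (\<lambda>w. a * h w + c) z = a * (Pop^^k) h z + c"
proof -
  have "(Pop^^k) (\<lambda>w. a * h w + c * (\<lambda>_. 1) w) z = a * (Pop^^k) h z + c * (Pop^^k) (\<lambda>_. 1) z"
    by (simp only: Popk_lin)
  then show ?thesis using Popk_const[OF assms] by simp
qed

lemma Popk_scale: "(Pop^^k) (\<lambda>w. a * h w) z = a * (Pop^^k) h z"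
  using Popk_lin[of k a h 0 h] by (simp add: fun_eq_iff)

lemma Popk_add: "(Pop^^k) (\<lambda>w. h w + h' w) z = (Pop^^k) h z + (Pop^^k) h' z"
  using Popk_lin[of k 1 h 1 h'] by (simp add: fun_eq_iff)

lemma Popk_diff: "(Pop^^k) (\<lambda>w. h w - h' w) z = (Pop^^k) h z - (Pop^^k) h' z"
  using Popk_lin[of k 1 h "-1" h'] by (simp add: fun_eq_iff)

lemma Popk_bounds: "z \<in> PS \<Longrightarrow> (\<And>w. w \<in> PS \<Longrightarrow> lo \<le> h w \<and> h w \<le> hi) \<Longrightarrow> lo \<le> (Pop^^k) h z \<and> (Pop^^k) h z \<le> hi"
  using Popk_mono_PS[of z "\<lambda>_. lo" h k] Popk_mono_PS[of z h "\<lambda>_. hi" k] Popk_const[of z k] by auto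

definition ind :: "real^'x \<Rightarrow> real^'x \<Rightarrow> real" where "ind w = (\<lambda>z. if z = w then 1 else 0)"

lemma rpow_Pop: "rpow T M g k z w = (Pop^^k) (ind w) z"
  by (induction k arbitrary: z) (auto simp: Pop_def ind_def)

lemma rpow_nonneg: "0 \<le> rpow T M g k z w"
  by (induction k arbitrary: z) (auto intro!: sum_nonneg)

lemma rpow_le1: "z \<in> PS \<Longrightarrow> rpow T M g k z w \<le> 1"
  unfolding rpow_Pop using Popk_bounds[of z 0 "ind w" 1 k] by (auto simp: ind_def)

lemma rpow_ck: "rpow T M g m z u * rpow T M g n u w \<le> rpow T M g (m + n) z w"
proof -
  have "rpow T M g (m + n) z w = (Pop^^m) ((Pop^^n) (ind w)) z"
    by (simp add: rpow_Pop funpow_add)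
  also have "\<dots> \<ge> (Pop^^m) (\<lambda>v. rpow T M g n u w * ind u v) z"
  proof (intro Popk_mono)
    fix v
    have e: "(Pop^^n) (ind w) v = rpow T M g n v w" by (simp add: rpow_Pop)
    show "rpow T M g n u w * ind u v \<le> (Pop^^n) (ind w) v"
      unfolding e by (cases "v = u") (auto simp: ind_def rpow_nonneg)
  qed
  finally have "(Pop^^m) (\<lambda>v. rpow T M g n u w * ind u v) z \<le> rpow T M g (m + n) z w" .
  moreover have "(Pop^^m) (\<lambda>v. rpow T M g n u w * ind u v) z = rpow T M g m z u * rpow T M g n u w"
    by (simp only: Popk_scale rpow_Pop[of m z u]) (simp add: mult.commute)
  ultimately show ?thesis by simp
qed

lemma rpow_R: "z \<in> Rset T M \<Longrightarrow> 0 < rpow T M g k z w \<Longrightarrow> w \<in> Rset T M"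
proof (induction k arbitrary: z)
  case 0 then show ?case by (simp split: if_splits)
next
  case (Suc k)
  from Suc.prems(2) obtain y where "0 < alpha T M (g z) y z" "0 < rpow T M g k (rmap T M (g z) y z) w"
  proof -
    assume *: "\<And>y. 0 < alpha T M (g z) y z \<Longrightarrow> 0 < rpow T M g k (rmap T M (g z) y z) w \<Longrightarrow> thesis"
    have "\<exists>y\<in>{y. 0 < alpha T M (g z) y z}. 0 < alpha T M (g z) y z * rpow T M g k (rmap T M (g z) y z) w"
    proof (rule ccontr)
      assume nb: "\<not> ?thesis"
      have *: "alpha T M (g z) y z * rpow T M g k (rmap T M (g z) y z) w \<le> 0"
        if y: "y \<in> {y. 0 < alpha T M (g z) y z}" for y
      proof -
        have "\<not> 0 < alpha T M (g z) y z * rpow T M g k (rmap T M (g z) y z) w" using nb y by blast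
        then show ?thesis by simp
      qed
      have "rpow T M g (Suc k) z w \<le> 0" unfolding rpow.simps by (rule sum_nonpos) (rule *)
      then show False using Suc.prems by simp
    qed
    then show thesis using * by (auto simp: zero_less_mult_iff)
  qed
  then show ?case using Suc.IH Rset_step Suc.prems(1) by blast
qed

end

context hmm begin

definition xa :: "'o \<Rightarrow> 'x" where
  "xa i = (SOME x. \<exists>y. 0 < M i x y \<and> (\<forall>x'. x' \<noteq> x \<longrightarrow> M i x' y = 0))"
definition ya :: "'o \<Rightarrow> 'v" where
  "ya i = (SOME y. 0 < M i (xa i) y \<and> (\<forall>x'. x' \<noteq> xa i \<longrightarrow> M i x' y = 0))"

lemma anchor: "0 < M i (xa i) (ya i)" "x \<noteq> xa i \<Longrightarrow> M i x (ya i) = 0"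
proof -
  have "\<exists>x y. 0 < M i x y \<and> (\<forall>x'. x' \<noteq> x \<longrightarrow> M i x' y = 0)"
    using anch by (auto simp: anchored_model_def)
  then have "\<exists>y. 0 < M i (xa i) y \<and> (\<forall>x'. x' \<noteq> xa i \<longrightarrow> M i x' y = 0)"
    unfolding xa_def by (rule someI_ex)
  then have "0 < M i (xa i) (ya i) \<and> (\<forall>x'. x' \<noteq> xa i \<longrightarrow> M i x' (ya i) = 0)"
    unfolding ya_def by (rule someI_ex)
  then show "0 < M i (xa i) (ya i)" "x \<noteq> xa i \<Longrightarrow> M i x (ya i) = 0" by auto
qed

lemma alpha_anchor: "alpha T M i (ya i) z = (\<Sum>j\<in>UNIV. z $ j * T j (xa i)) * M i (xa i) (ya i)"
proof -
  have "alpha T M i (ya i) z = (\<Sum>j\<in>UNIV. z $ j * T j (xa i) * M i (xa i) (ya i))"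
    unfolding alpha_def
    by (intro sum.cong refl, subst sum.remove[of _ "xa i"]) (auto simp: anchor(2) intro!: sum.neutral)
  then show ?thesis by (simp add: sum_distrib_right)
qed

definition ca :: "'o \<Rightarrow> real" where "ca i = Min (range (\<lambda>j. T j (xa i))) * M i (xa i) (ya i)"

lemma ca_pos: "0 < ca i"
  unfolding ca_def using anchor(1) T_pos by (intro mult_pos_pos) (auto)

lemma alpha_anchor_ge: assumes "z \<in> PS" shows "ca i \<le> alpha T M i (ya i) z"
proof -
  have "Min (range (\<lambda>j. T j (xa i))) = (\<Sum>j\<in>UNIV. z $ j * Min (range (\<lambda>j. T j (xa i))))"
    using PS_sum[OF assms] by (simp add: sum_distrib_right[symmetric])
  also have "\<dots> \<le> (\<Sum>j\<in>UNIV. z $ j * T j (xa i))"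
    using PS_nonneg[OF assms] by (intro sum_mono mult_left_mono) auto
  finally show ?thesis unfolding alpha_anchor ca_def using M_nonneg by (intro mult_right_mono) auto
qed

lemma alpha_anchor_pos: "z \<in> PS \<Longrightarrow> 0 < alpha T M i (ya i) z"
  using alpha_anchor_ge ca_pos by (blast intro: less_le_trans)

lemma rmap_anchor: assumes "z \<in> PS" shows "rmap T M i (ya i) z = delta (xa i)"
proof -
  have ap: "0 < alpha T M i (ya i) z" using alpha_anchor_pos[OF assms] .
  have "rmap T M i (ya i) z $ k = delta (xa i) $ k" for k
  proof (cases "k = xa i")
    case True
    have "(\<Sum>j\<in>UNIV. M i k (ya i) * T j k * z $ j) = alpha T M i (ya i) z"
      unfolding alpha_anchor True by (simp add: sum_distrib_left sum_distrib_right mult_ac)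
    then show ?thesis using ap True by (simp add: rmap_comp delta_def)
  next
    case False
    then show ?thesis by (simp add: rmap_comp delta_def anchor(2))
  qed
  then show ?thesis by (simp add: vec_eq_iff)
qed

end

context hmm begin
subsection \<open>Doeblin minorization\<close>

definition b0 :: "real^'x" where "b0 = delta undefined"

lemma b0_R: "b0 \<in> Rset T M" by (simp add: b0_def delta_Rset)
lemma b0_PS: "b0 \<in> PS" by (simp add: b0_def delta_PS)

lemma exists_N: "\<exists>N. \<forall>i. 0 < rpow T M g N (delta (xa i)) b0"
proof -
  define S where "S = {k. 0 < k \<and> 0 < rpow T M g k b0 b0}"
  have add: "a + b \<in> S" if "a \<in> S" "b \<in> S" for a b
    using that rpow_ck[of a b0 b0 b b0] unfolding S_def
    by (auto intro: less_le_trans mult_pos_pos)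
  have "Gcd S = 1" using aper b0_R unfolding restricted_aperiodic_def S_def by auto
  then obtain n0 where n0: "\<forall>n\<ge>n0. n \<in> S" using semigroup_eventually[OF add] unfolding S_def by auto
  have "\<forall>i. \<exists>k. 0 < rpow T M g k (delta (xa i)) b0"
    using irr b0_R delta_Rset unfolding restricted_irreducible_def by blast
  then obtain kf where kf: "\<And>i. 0 < rpow T M g (kf i) (delta (xa i)) b0" by metis
  define N where "N = (\<Sum>i\<in>UNIV. kf i) + n0"
  have "0 < rpow T M g N (delta (xa i)) b0" for i
  proof -
    have le: "kf i \<le> (\<Sum>i\<in>UNIV. kf i)" by (rule member_le_sum) auto
    have "N - kf i \<in> S" using n0 le unfolding N_def by auto
    then have "0 < rpow T M g (N - kf i) b0 b0" by (simp add: S_def)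
    then have "0 < rpow T M g (kf i) (delta (xa i)) b0 * rpow T M g (N - kf i) b0 b0"
      using kf by simp
    also have "\<dots> \<le> rpow T M g (kf i + (N - kf i)) (delta (xa i)) b0" by (rule rpow_ck)
    finally show ?thesis using le unfolding N_def by simp
  qed
  then show ?thesis by blast
qed

definition Nd :: nat where "Nd = (SOME N. \<forall>i. 0 < rpow T M g N (delta (xa i)) b0)"

lemma Nd: "0 < rpow T M g Nd (delta (xa i)) b0"
  using someI_ex[OF exists_N] unfolding Nd_def by blast

definition K :: nat where "K = Suc Nd"
definition eps :: real where "eps = Min (range (\<lambda>i. ca i * rpow T M g Nd (delta (xa i)) b0))"

lemma eps_pos: "0 < eps"
  unfolding eps_def using ca_pos Nd by (auto intro: mult_pos_pos)

lemma minor: assumes "z \<in> PS" shows "eps \<le> rpow T M g K z b0"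
proof -
  let ?i = "g z"
  have "eps \<le> ca ?i * rpow T M g Nd (delta (xa ?i)) b0" unfolding eps_def by simp
  also have "\<dots> \<le> alpha T M ?i (ya ?i) z * rpow T M g Nd (rmap T M ?i (ya ?i) z) b0"
    using alpha_anchor_ge[OF assms] rmap_anchor[OF assms] rpow_nonneg by (auto intro: mult_right_mono)
  also have "\<dots> \<le> rpow T M g K z b0"
    unfolding K_def rpow.simps
    by (rule member_le_sum[where f="\<lambda>y. alpha T M ?i y z * rpow T M g Nd (rmap T M ?i y z) b0"])
       (auto simp: alpha_anchor_pos[OF assms] rpow_nonneg)
  finally show ?thesis .
qed

lemma eps_le1: "eps \<le> 1"
  using minor[OF b0_PS] rpow_le1[OF b0_PS, of K b0] by linarith

lemma sandwich:
  assumes z: "z \<in> PS" and h: "\<And>w. w \<in> PS \<Longrightarrow> lo \<le> h w \<and> h w \<le> hi"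
  shows "lo + eps * (h b0 - lo) \<le> (Pop^^K) h z \<and> (Pop^^K) h z \<le> hi - eps * (hi - h b0)"
proof
  have hb: "lo \<le> h b0" "h b0 \<le> hi" using h[OF b0_PS] by auto
  have "(Pop^^K) (\<lambda>w. (h b0 - lo) * ind b0 w + lo) z \<le> (Pop^^K) h z"
    using z h hb by (intro Popk_mono_PS) (auto simp: ind_def)
  then have "(h b0 - lo) * rpow T M g K z b0 + lo \<le> (Pop^^K) h z"
    by (simp add: Popk_affine[OF z] rpow_Pop)
  moreover have "(h b0 - lo) * eps \<le> (h b0 - lo) * rpow T M g K z b0"
    using minor[OF z] hb by (intro mult_left_mono) auto
  ultimately show "lo + eps * (h b0 - lo) \<le> (Pop^^K) h z" by (simp add: algebra_simps)
  have "(Pop^^K) h z \<le> (Pop^^K) (\<lambda>w. (- (hi - h b0)) * ind b0 w + hi) z"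
    using z h hb by (intro Popk_mono_PS) (auto simp: ind_def)
  then have "(Pop^^K) h z \<le> (- (hi - h b0)) * rpow T M g K z b0 + hi"
    by (simp add: Popk_affine[OF z] rpow_Pop)
  moreover have "(hi - h b0) * eps \<le> (hi - h b0) * rpow T M g K z b0"
    using minor[OF z] hb by (intro mult_left_mono) auto
  ultimately show "(Pop^^K) h z \<le> hi - eps * (hi - h b0)" by (simp add: algebra_simps)
qed

lemma contract:
  assumes h: "\<And>w. w \<in> PS \<Longrightarrow> lo \<le> h w \<and> h w \<le> lo + D" and z: "z \<in> PS" and z': "z' \<in> PS"
  shows "\<bar>(Pop^^K) h z - (Pop^^K) h z'\<bar> \<le> (1 - eps) * D"
proof -
  have s1: "lo + eps * (h b0 - lo) \<le> (Pop^^K) h z \<and> (Pop^^K) h z \<le> (lo + D) - eps * ((lo + D) - h b0)"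
    by (rule sandwich[where h=h]) (use z h in auto)
  have s2: "lo + eps * (h b0 - lo) \<le> (Pop^^K) h z' \<and> (Pop^^K) h z' \<le> (lo + D) - eps * ((lo + D) - h b0)"
    by (rule sandwich[where h=h]) (use z' h in auto)
  have "(Pop^^K) h z - (Pop^^K) h z' \<le> (1 - eps) * D" "(Pop^^K) h z' - (Pop^^K) h z \<le> (1 - eps) * D"
    using s1 s2 by (simp_all add: algebra_simps)
  then show ?thesis by (simp add: abs_le_iff)
qed

lemma interval_exists:
  fixes v :: "real^'x \<Rightarrow> real"
  assumes "\<And>z z'. z \<in> PS \<Longrightarrow> z' \<in> PS \<Longrightarrow> \<bar>v z - v z'\<bar> \<le> D"
  shows "\<exists>lo. \<forall>z\<in>PS. lo \<le> v z \<and> v z \<le> lo + D"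
proof (intro exI ballI conjI)
  have bdd: "bdd_below (v ` PS)"
  proof (rule bdd_belowI[of _ "v b0 - D"])
    fix x assume "x \<in> v ` PS"
    then obtain w where w: "w \<in> PS" "x = v w" by auto
    show "v b0 - D \<le> x" using assms[OF w(1) b0_PS] w(2) by (simp add: abs_le_iff)
  qed
  fix z :: "real^'x" assume z: "z \<in> PS"
  show "Inf (v ` PS) \<le> v z" using bdd z by (auto intro: cInf_lower)
  have "v z - D \<le> Inf (v ` PS)"
  proof (rule cInf_greatest)
    show "v ` PS \<noteq> {}" using b0_PS by auto
    fix x assume "x \<in> v ` PS"
    then obtain w where w: "w \<in> PS" "x = v w" by auto
    show "v z - D \<le> x" using assms[OF z w(1)] w(2) by (simp add: abs_le_iff)
  qed
  then show "v z \<le> Inf (v ` PS) + D" by simp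
qed

lemma osc:
  assumes B: "\<And>w. w \<in> PS \<Longrightarrow> \<bar>h w\<bar> \<le> B"
  shows "z \<in> PS \<Longrightarrow> z' \<in> PS \<Longrightarrow> \<bar>(Pop^^(j*K)) h z - (Pop^^(j*K)) h z'\<bar> \<le> (1 - eps)^j * (2*B)"
proof (induction j arbitrary: z z')
  case 0
  then show ?case using B[of z] B[of z'] by simp
next
  case (Suc j)
  obtain lo where lo: "\<forall>w\<in>PS. lo \<le> (Pop^^(j*K)) h w \<and> (Pop^^(j*K)) h w \<le> lo + (1 - eps)^j * (2*B)"
  proof -
    have "\<exists>lo. \<forall>w\<in>PS. lo \<le> (Pop^^(j*K)) h w \<and> (Pop^^(j*K)) h w \<le> lo + (1 - eps)^j * (2*B)"
      by (rule interval_exists) (rule Suc.IH)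
    then show ?thesis using that by blast
  qed
  have "\<bar>(Pop^^K) ((Pop^^(j*K)) h) z - (Pop^^K) ((Pop^^(j*K)) h) z'\<bar> \<le> (1 - eps) * ((1 - eps)^j * (2*B))"
    by (rule contract[where lo=lo]) (use lo Suc.prems in blast)+
  moreover have "(Pop^^(Suc j * K)) h = (Pop^^K) ((Pop^^(j*K)) h)" by (simp add: funpow_add)
  ultimately show ?case by (simp add: mult.assoc)
qed

lemma unif:
  assumes B: "\<And>w. w \<in> PS \<Longrightarrow> \<bar>h w\<bar> \<le> B"
  shows "\<exists>lo. \<forall>t\<ge>j*K. \<forall>z\<in>PS. lo \<le> (Pop^^t) h z \<and> (Pop^^t) h z \<le> lo + (1 - eps)^j * (2*B)"
proof -
  obtain lo where lo: "\<forall>w\<in>PS. lo \<le> (Pop^^(j*K)) h w \<and> (Pop^^(j*K)) h w \<le> lo + (1 - eps)^j * (2*B)"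
  proof -
    have "\<exists>lo. \<forall>w\<in>PS. lo \<le> (Pop^^(j*K)) h w \<and> (Pop^^(j*K)) h w \<le> lo + (1 - eps)^j * (2*B)"
      by (rule interval_exists) (rule osc[OF B])
    then show ?thesis using that by blast
  qed
  have "lo \<le> (Pop^^t) h z \<and> (Pop^^t) h z \<le> lo + (1 - eps)^j * (2*B)" if "j*K \<le> t" "z \<in> PS" for t z
  proof -
    have "t = (t - j*K) + j*K" using that by simp
    then have "(Pop^^t) = (Pop^^(t - j*K)) \<circ> (Pop^^(j*K))" by (metis funpow_add)
    then have "(Pop^^t) h = (Pop^^(t - j*K)) ((Pop^^(j*K)) h)" by simp
    moreover have "lo \<le> (Pop^^(t - j*K)) ((Pop^^(j*K)) h) z \<and> (Pop^^(t - j*K)) ((Pop^^(j*K)) h) z \<le> lo + (1 - eps)^j * (2*B)"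
      by (rule Popk_bounds[OF that(2)]) (use lo in auto)
    ultimately show ?thesis by simp
  qed
  then show ?thesis by blast
qed

end

context hmm begin

lemma K_pos: "0 < K" by (simp add: K_def)

lemma geom_small: assumes "0 < r" shows "\<exists>j. (1 - eps)^j * C < r"
proof -
  have "(\<lambda>j. (1 - eps)^j) \<longlonglongrightarrow> 0"
    using eps_pos eps_le1 by (intro LIMSEQ_power_zero) auto
  then have "(\<lambda>j. (1 - eps)^j * C) \<longlonglongrightarrow> 0 * C" by (rule tendsto_mult_right)
  then have "eventually (\<lambda>j. (1 - eps)^j * C < r) sequentially"
    using assms by (intro order_tendstoD(2)) auto
  then show ?thesis by (auto simp: eventually_sequentially)
qed

definition Lim :: "(real^'x \<Rightarrow> real) \<Rightarrow> real" where
  "Lim h = lim (\<lambda>t. (Pop^^t) h b0)"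

definition bnd :: "(real^'x \<Rightarrow> real) \<Rightarrow> bool" where
  "bnd h \<longleftrightarrow> (\<exists>B. \<forall>w\<in>PS. \<bar>h w\<bar> \<le> B)"

lemma conv:
  assumes B: "\<And>w. w \<in> PS \<Longrightarrow> \<bar>h w\<bar> \<le> B"
  shows "(\<lambda>t. (Pop^^t) h b0) \<longlonglongrightarrow> Lim h"
    and "z \<in> PS \<Longrightarrow> j*K \<le> t \<Longrightarrow> \<bar>(Pop^^t) h z - Lim h\<bar> \<le> (1 - eps)^j * (2*B)"
proof -
  let ?X = "\<lambda>t. (Pop^^t) h b0"
  have "Cauchy ?X"
    unfolding Cauchy_def
  proof (intro allI impI)
    fix e :: real assume e: "0 < e"
    obtain j where j: "(1 - eps)^j * (2*B) < e" using geom_small[OF e] by blast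
    have "\<exists>lo. \<forall>t\<ge>j*K. \<forall>z\<in>PS. lo \<le> (Pop^^t) h z \<and> (Pop^^t) h z \<le> lo + (1 - eps)^j * (2*B)"
      by (rule unif[where h=h and B=B, OF B])
    then obtain lo where lo: "\<forall>t\<ge>j*K. \<forall>z\<in>PS. lo \<le> (Pop^^t) h z \<and> (Pop^^t) h z \<le> lo + (1 - eps)^j * (2*B)" ..
    show "\<exists>M. \<forall>m\<ge>M. \<forall>n\<ge>M. dist (?X m) (?X n) < e"
    proof (intro exI allI impI)
      fix m n assume "j*K \<le> m" "j*K \<le> n"
      then have "lo \<le> ?X m \<and> ?X m \<le> lo + (1 - eps)^j * (2*B)" "lo \<le> ?X n \<and> ?X n \<le> lo + (1 - eps)^j * (2*B)"
        using lo b0_PS by auto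
      then show "dist (?X m) (?X n) < e" using j unfolding dist_real_def abs_less_iff by linarith
    qed
  qed
  then show lim: "?X \<longlonglongrightarrow> Lim h"
    unfolding Lim_def by (simp add: Cauchy_convergent_iff convergent_LIMSEQ_iff)
  assume z: "z \<in> PS" and t: "j*K \<le> t"
  have "\<exists>lo. \<forall>t\<ge>j*K. \<forall>z\<in>PS. lo \<le> (Pop^^t) h z \<and> (Pop^^t) h z \<le> lo + (1 - eps)^j * (2*B)"
    by (rule unif[where h=h and B=B, OF B])
  then obtain lo where lo: "\<forall>t\<ge>j*K. \<forall>z\<in>PS. lo \<le> (Pop^^t) h z \<and> (Pop^^t) h z \<le> lo + (1 - eps)^j * (2*B)" ..
  have "lo \<le> Lim h"
    by (rule LIMSEQ_le_const[OF lim]) (use lo b0_PS in blast)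
  moreover have "Lim h \<le> lo + (1 - eps)^j * (2*B)"
    by (rule LIMSEQ_le_const2[OF lim]) (use lo b0_PS in blast)
  moreover have "lo \<le> (Pop^^t) h z \<and> (Pop^^t) h z \<le> lo + (1 - eps)^j * (2*B)"
    using lo z t by blast
  ultimately show "\<bar>(Pop^^t) h z - Lim h\<bar> \<le> (1 - eps)^j * (2*B)" by (simp add: abs_le_iff)
qed

lemma conv_z:
  assumes "bnd h" "z \<in> PS"
  shows "(\<lambda>t. (Pop^^t) h z) \<longlonglongrightarrow> Lim h"
proof -
  obtain B where B: "\<And>w. w \<in> PS \<Longrightarrow> \<bar>h w\<bar> \<le> B" using assms(1) unfolding bnd_def by blast
  show ?thesis
    unfolding LIMSEQ_def dist_real_def
  proof (intro allI impI)
    fix r :: real assume "0 < r"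
    then obtain j where j: "(1 - eps)^j * (2*B) < r" using geom_small by blast
    show "\<exists>no. \<forall>n\<ge>no. \<bar>(Pop^^n) h z - Lim h\<bar> < r"
      using conv(2)[where h=h and B=B, OF B assms(2)] j by (intro exI[of _ "j*K"]) (auto intro: le_less_trans)
  qed
qed

lemma conv_unif:
  assumes "bnd h" "0 < r"
  shows "\<exists>N. \<forall>t\<ge>N. \<forall>z\<in>PS. \<bar>(Pop^^t) h z - Lim h\<bar> < r"
proof -
  obtain B where B: "\<And>w. w \<in> PS \<Longrightarrow> \<bar>h w\<bar> \<le> B" using assms(1) unfolding bnd_def by blast
  obtain j where j: "(1 - eps)^j * (2*B) < r" using geom_small[OF assms(2)] by blast
  show ?thesis
    using conv(2)[where h=h and B=B, OF B] j by (intro exI[of _ "j*K"]) (auto intro: le_less_trans)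
qed

lemma bnd_lin: "bnd h \<Longrightarrow> bnd h' \<Longrightarrow> bnd (\<lambda>w. a * h w + b * h' w)"
proof -
  assume "bnd h" "bnd h'"
  then obtain B B' where B: "\<And>w. w \<in> PS \<Longrightarrow> \<bar>h w\<bar> \<le> B" and B': "\<And>w. w \<in> PS \<Longrightarrow> \<bar>h' w\<bar> \<le> B'"
    unfolding bnd_def by blast
  have "\<bar>a * h w + b * h' w\<bar> \<le> \<bar>a\<bar> * B + \<bar>b\<bar> * B'" if "w \<in> PS" for w
  proof -
    have "\<bar>a * h w + b * h' w\<bar> \<le> \<bar>a\<bar> * \<bar>h w\<bar> + \<bar>b\<bar> * \<bar>h' w\<bar>"
      by (metis abs_mult abs_triangle_ineq)
    also have "\<dots> \<le> \<bar>a\<bar> * B + \<bar>b\<bar> * B'"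
      using B[OF that] B'[OF that] by (intro add_mono mult_left_mono) auto
    finally show ?thesis .
  qed
  then show ?thesis unfolding bnd_def by blast
qed

lemma bnd_const: "bnd (\<lambda>_. c)" unfolding bnd_def by auto

lemma bnd_ind: "bnd (ind w)" unfolding bnd_def ind_def by (intro exI[of _ 1]) auto

lemma bnd_I: "(\<And>w. w \<in> PS \<Longrightarrow> \<bar>h w\<bar> \<le> B) \<Longrightarrow> bnd h" unfolding bnd_def by blast

lemma bnd_Pop: assumes "bnd h" shows "bnd (Pop h)"
proof -
  obtain B where B: "\<And>w. w \<in> PS \<Longrightarrow> \<bar>h w\<bar> \<le> B" using assms unfolding bnd_def by blast
  have "\<bar>Pop h z\<bar> \<le> B" if "z \<in> PS" for z
  proof -
    have "-B \<le> (Pop^^1) h z \<and> (Pop^^1) h z \<le> B"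
      by (rule Popk_bounds[OF that]) (auto dest!: B simp: abs_le_iff)
    then show ?thesis by (simp add: abs_le_iff)
  qed
  then show ?thesis unfolding bnd_def by blast
qed

lemma bnd_Popk: assumes "bnd h" shows "bnd ((Pop^^k) h)"
  by (induction k) (auto intro: bnd_Pop assms)

lemma Lim_lin:
  assumes "bnd h" "bnd h'"
  shows "Lim (\<lambda>w. a * h w + b * h' w) = a * Lim h + b * Lim h'"
proof -
  obtain B where B: "\<And>w. w \<in> PS \<Longrightarrow> \<bar>h w\<bar> \<le> B" using assms(1) unfolding bnd_def by blast
  obtain B' where B': "\<And>w. w \<in> PS \<Longrightarrow> \<bar>h' w\<bar> \<le> B'" using assms(2) unfolding bnd_def by blast
  have "(\<lambda>t. (Pop^^t) (\<lambda>w. a * h w + b * h' w) b0) = (\<lambda>t. a * (Pop^^t) h b0 + b * (Pop^^t) h' b0)"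
    by (simp add: Popk_lin)
  moreover have "(\<lambda>t. a * (Pop^^t) h b0 + b * (Pop^^t) h' b0) \<longlonglongrightarrow> a * Lim h + b * Lim h'"
    by (intro tendsto_intros conv(1)[where h=h and B=B, OF B] conv(1)[where h=h' and B=B', OF B'])
  ultimately show ?thesis unfolding Lim_def by (simp add: limI)
qed

lemma Lim_const: "Lim (\<lambda>_. c) = c"
  unfolding Lim_def by (simp add: Popk_const[OF b0_PS])

lemma Lim_cong: assumes "\<And>w. w \<in> PS \<Longrightarrow> h w = h' w" shows "Lim h = Lim h'"
proof -
  have "(\<lambda>t. (Pop^^t) h b0) = (\<lambda>t. (Pop^^t) h' b0)"
    by (rule ext, rule Popk_cong_PS[OF b0_PS]) (rule assms)
  then show ?thesis unfolding Lim_def by simp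
qed

lemma Lim_mono:
  assumes "bnd h" "bnd h'" "\<And>w. w \<in> PS \<Longrightarrow> h w \<le> h' w"
  shows "Lim h \<le> Lim h'"
proof -
  obtain B where B: "\<And>w. w \<in> PS \<Longrightarrow> \<bar>h w\<bar> \<le> B" using assms(1) unfolding bnd_def by blast
  obtain B' where B': "\<And>w. w \<in> PS \<Longrightarrow> \<bar>h' w\<bar> \<le> B'" using assms(2) unfolding bnd_def by blast
  show ?thesis
    by (rule LIMSEQ_le[OF conv(1)[where h=h and B=B, OF B] conv(1)[where h=h' and B=B', OF B']]) (auto intro: Popk_mono_PS[OF b0_PS] assms(3))
qed

lemma Lim_Pop: assumes "bnd h" shows "Lim (Pop h) = Lim h"
proof -
  obtain B where B: "\<And>w. w \<in> PS \<Longrightarrow> \<bar>h w\<bar> \<le> B" using assms(1) unfolding bnd_def by blast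
  have "(\<lambda>t. (Pop^^t) (Pop h) b0) = (\<lambda>t. (Pop^^(Suc t)) h b0)"
    by (simp add: funpow_Suc_right del: funpow.simps)
  moreover have "(\<lambda>t. (Pop^^(Suc t)) h b0) \<longlonglongrightarrow> Lim h"
    by (rule LIMSEQ_Suc[OF conv(1)[where h=h and B=B, OF B]])
  ultimately show ?thesis unfolding Lim_def[of "Pop h"] by (simp add: limI)
qed

lemma bnd_sum: "finite F \<Longrightarrow> (\<And>w. w \<in> F \<Longrightarrow> bnd (hs w)) \<Longrightarrow> bnd (\<lambda>z. \<Sum>w\<in>F. hs w z)"
proof (induction F rule: finite_induct)
  case empty then show ?case by (simp add: bnd_const)
next
  case (insert y G)
  then show ?case using bnd_lin[of "hs y" "\<lambda>z. \<Sum>w\<in>G. hs w z" 1 1] by simp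
qed

lemma Lim_sum:
  assumes "finite F" "\<And>w. w \<in> F \<Longrightarrow> bnd (hs w)"
  shows "Lim (\<lambda>z. \<Sum>w\<in>F. hs w z) = (\<Sum>w\<in>F. Lim (hs w))"
  using assms
proof (induction F rule: finite_induct)
  case empty then show ?case by (simp add: Lim_const)
next
  case (insert x F)
  have bF: "bnd (\<lambda>z. \<Sum>w\<in>F. hs w z)"
    using insert.hyps(1) insert.prems by (intro bnd_sum) auto
  have "Lim (\<lambda>z. \<Sum>w\<in>insert x F. hs w z) = Lim (\<lambda>z. 1 * hs x z + 1 * (\<Sum>w\<in>F. hs w z))"
    using insert.hyps by simp
  also have "\<dots> = Lim (hs x) + Lim (\<lambda>z. \<Sum>w\<in>F. hs w z)"
    using Lim_lin[OF insert.prems[of x] bF, of 1 1] by simp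
  finally show ?case using insert by simp
qed

end

context hmm begin

fun Reach :: "nat \<Rightarrow> real^'x \<Rightarrow> (real^'x) set" where
  "Reach 0 z = {z}"
| "Reach (Suc k) z = (\<Union>y\<in>{y. 0 < alpha T M (g z) y z}. Reach k (rmap T M (g z) y z))"

lemma Reach_finite: "finite (Reach k z)"
  by (induction k arbitrary: z) auto

lemma Reach_PS: "z \<in> PS \<Longrightarrow> Reach k z \<subseteq> PS"
proof (induction k arbitrary: z)
  case (Suc k) then show ?case using rmap_PS by fastforce
qed simp

lemma Reach_R: "z \<in> Rset T M \<Longrightarrow> Reach k z \<subseteq> Rset T M"
proof (induction k arbitrary: z)
  case (Suc k) then show ?case using Rset_step by fastforce
qed simp

lemma rpow_out: "w \<notin> Reach k z \<Longrightarrow> rpow T M g k z w = 0"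
  by (induction k arbitrary: z) (auto intro!: sum.neutral)

lemma Popk_Reach: "(Pop^^k) h z = (\<Sum>w\<in>Reach k z. rpow T M g k z w * h w)"
proof (induction k arbitrary: z)
  case 0 then show ?case by simp
next
  case (Suc k)
  let ?A = "{y. 0 < alpha T M (g z) y z}"
  let ?r = "\<lambda>y. rmap T M (g z) y z"
  let ?a = "\<lambda>y. alpha T M (g z) y z"
  let ?RS = "Reach (Suc k) z"
  have fin: "finite ?RS" by (rule Reach_finite)
  have "(Pop^^Suc k) h z = (\<Sum>y\<in>?A. ?a y * (Pop^^k) h (?r y))" by (simp add: Pop_def)
  also have "\<dots> = (\<Sum>y\<in>?A. ?a y * (\<Sum>w\<in>Reach k (?r y). rpow T M g k (?r y) w * h w))"
    using Suc.IH by simp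
  also have "\<dots> = (\<Sum>y\<in>?A. ?a y * (\<Sum>w\<in>?RS. rpow T M g k (?r y) w * h w))"
  proof (rule sum.cong[OF refl])
    fix y assume y: "y \<in> ?A"
    have "(\<Sum>w\<in>Reach k (?r y). rpow T M g k (?r y) w * h w) = (\<Sum>w\<in>?RS. rpow T M g k (?r y) w * h w)"
      using fin y rpow_out by (intro sum.mono_neutral_left) auto
    then show "?a y * (\<Sum>w\<in>Reach k (?r y). rpow T M g k (?r y) w * h w) = ?a y * (\<Sum>w\<in>?RS. rpow T M g k (?r y) w * h w)"
      by simp
  qed
  also have "\<dots> = (\<Sum>y\<in>?A. \<Sum>w\<in>?RS. ?a y * rpow T M g k (?r y) w * h w)"
    by (simp add: sum_distrib_left mult.assoc)
  also have "\<dots> = (\<Sum>w\<in>?RS. \<Sum>y\<in>?A. ?a y * rpow T M g k (?r y) w * h w)"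
    by (rule sum.swap)
  also have "\<dots> = (\<Sum>w\<in>?RS. rpow T M g (Suc k) z w * h w)"
    by (simp add: sum_distrib_right)
  finally show ?case .
qed

lemma sum_ind_mult: "finite S \<Longrightarrow> (\<Sum>wa\<in>S. (h wa::real) * (if w = wa then 1 else 0)) = (if w \<in> S then h w else 0)"
proof -
  assume "finite S"
  have "(\<Sum>wa\<in>S. h wa * (if w = wa then 1 else 0)) = (\<Sum>wa\<in>S. if w = wa then h wa else 0)"
    by (intro sum.cong) auto
  then show ?thesis using \<open>finite S\<close> by simp
qed

definition indS :: "(real^'x) set \<Rightarrow> real^'x \<Rightarrow> real" where
  "indS S z = (if z \<in> S then 1 else 0)"

lemma indS_sum: "finite S \<Longrightarrow> indS S z = (\<Sum>w\<in>S. ind w z)"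
  by (simp add: indS_def ind_def)

lemma bnd_indS: "bnd (indS S)" unfolding bnd_def indS_def by (intro exI[of _ 1]) auto

definition pinf :: "real^'x \<Rightarrow> real" where
  "pinf w = (if w \<in> Rset T M then Lim (ind w) else 0)"

lemma pi_nonneg: "0 \<le> pinf w"
proof -
  have "Lim (\<lambda>_. 0) \<le> Lim (ind w)" by (rule Lim_mono[OF bnd_const bnd_ind]) (simp add: ind_def)
  then show ?thesis by (simp add: pinf_def Lim_const)
qed

lemma Lim_indS: assumes "finite F" shows "Lim (indS F) = (\<Sum>w\<in>F. Lim (ind w))"
proof -
  have "Lim (indS F) = Lim (\<lambda>z. \<Sum>w\<in>F. ind w z)" by (rule Lim_cong) (simp add: indS_sum assms)
  also have "\<dots> = (\<Sum>w\<in>F. Lim (ind w))" by (rule Lim_sum[OF assms bnd_ind])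
  finally show ?thesis .
qed

lemma pi_sum: assumes fin: "finite F" and sub: "F \<subseteq> Rset T M" shows "(\<Sum>w\<in>F. pinf w) = Lim (indS F)"
proof -
  have "(\<Sum>w\<in>F. pinf w) = (\<Sum>w\<in>F. Lim (ind w))" using sub by (intro sum.cong refl) (auto simp: pinf_def)
  then show ?thesis using Lim_indS[OF fin] by simp
qed

lemma Lim_indS_le1: "Lim (indS F) \<le> 1"
  using Lim_mono[OF bnd_indS bnd_const, of F 1] by (auto simp: indS_def Lim_const)

lemma pi_sum_le1: assumes "finite F" shows "(\<Sum>w\<in>F. pinf w) \<le> 1"
proof -
  have "(\<Sum>w\<in>F. pinf w) = (\<Sum>w\<in>F \<inter> Rset T M. pinf w)"
    by (rule sum.mono_neutral_right) (auto simp: assms pinf_def)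
  also have "\<dots> = Lim (indS (F \<inter> Rset T M))" by (rule pi_sum) (auto simp: assms)
  also have "\<dots> \<le> 1" by (rule Lim_indS_le1)
  finally show ?thesis .
qed

definition St :: "nat \<Rightarrow> (real^'x) set" where "St j = Reach (j*K) b0"

lemma St_finite: "finite (St j)" by (simp add: St_def Reach_finite)
lemma St_R: "St j \<subseteq> Rset T M" by (simp add: St_def Reach_R b0_R)

lemma rpow_St_sum: "(\<Sum>w\<in>St j. rpow T M g (j*K) b0 w) = 1"
  using Popk_Reach[of "j*K" "\<lambda>_. 1" b0] Popk_const[OF b0_PS, of "j*K" 1] by (simp add: St_def)

lemma tail: "1 - (1 - eps)^j * 2 \<le> Lim (indS (St j))"
proof -
  have "(Pop^^(j*K)) (indS (St j)) b0 = (\<Sum>w\<in>St j. rpow T M g (j*K) b0 w)"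
    by (simp add: Popk_Reach St_def indS_def)
  then have e: "(Pop^^(j*K)) (indS (St j)) b0 = 1" using rpow_St_sum by simp
  have "\<bar>(Pop^^(j*K)) (indS (St j)) b0 - Lim (indS (St j))\<bar> \<le> (1 - eps)^j * (2*1)"
    by (rule conv(2)[where h="indS (St j)" and B=1]) (auto simp: indS_def b0_PS)
  then show ?thesis using e by (simp add: abs_le_iff)
qed

lemma pi_St: "1 - (1 - eps)^j * 2 \<le> (\<Sum>w\<in>St j. pinf w)"
  using tail[of j] pi_sum[OF St_finite St_R] by simp

lemma eps_geom_nonneg: "0 \<le> (1 - eps)^j" using eps_le1 by simp

lemma ge1_from_geom: assumes "\<And>j. 1 - (1 - eps)^j * C \<le> (s::real)" shows "1 \<le> s"
proof (rule ccontr)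
  assume "\<not> 1 \<le> s"
  then have "0 < 1 - s" by simp
  then obtain j where "(1 - eps)^j * C < 1 - s" using geom_small by blast
  then show False using assms[of j] by simp
qed

lemma pi_abs_summable: "Infinite_Set_Sum.abs_summable_on pinf UNIV"
  by (rule abs_summable_finite_sumsI[where B=1]) (simp add: pi_nonneg pi_sum_le1)

lemma pi_infsetsum: "infsetsum pinf UNIV = 1"
proof -
  have sup: "ennreal (infsetsum pinf UNIV) = (SUP F\<in>{F. finite F \<and> F \<subseteq> UNIV}. ennreal (sum pinf F))"
    by (rule infsetsum_nonneg_is_SUPREMUM_ennreal[OF pi_abs_summable]) (simp add: pi_nonneg)
  have nn: "0 \<le> infsetsum pinf UNIV" by (simp add: infsetsum_nonneg pi_nonneg)
  have "ennreal (infsetsum pinf UNIV) \<le> 1"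
    unfolding sup by (rule SUP_least) (auto simp: pi_sum_le1)
  then have le: "infsetsum pinf UNIV \<le> 1" by simp
  have "sum pinf (St j) \<le> infsetsum pinf UNIV" for j
  proof -
    have "ennreal (sum pinf (St j)) \<le> ennreal (infsetsum pinf UNIV)"
      unfolding sup by (rule SUP_upper) (auto simp: St_finite)
    then show ?thesis using nn by simp
  qed
  then have "1 \<le> infsetsum pinf UNIV"
    by (intro ge1_from_geom[where C=2]) (rule order_trans[OF pi_St])
  with le show ?thesis by simp
qed

lemma pi_nn_integral: "(\<integral>\<^sup>+x. ennreal (pinf x) \<partial>count_space UNIV) = 1"
  using nn_integral_conv_infsetsum[OF pi_abs_summable] pi_infsetsum pi_nonneg by simp

definition Ppmf :: "(real^'x) pmf" where "Ppmf = embed_pmf pinf"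

lemma pmf_Ppmf: "pmf Ppmf w = pinf w"
  unfolding Ppmf_def by (rule pmf_embed_pmf) (auto simp: pi_nonneg pi_nn_integral)

lemma set_Ppmf: "set_pmf Ppmf \<subseteq> Rset T M"
  by (auto simp: set_pmf_eq pmf_Ppmf pinf_def)

lemma Ppmf_integrable: fixes h :: "real^'x \<Rightarrow> real" shows "(\<And>w. \<bar>h w\<bar> \<le> B) \<Longrightarrow> integrable (measure_pmf Ppmf) h"
  by (rule measure_pmf.integrable_const_bound[where B=B]) auto

lemma Lim_pmf:
  fixes h :: "real^'x \<Rightarrow> real" and B :: real
  assumes B: "\<And>w. \<bar>h w\<bar> \<le> B"
  shows "Lim h = (\<integral>w. h w \<partial>measure_pmf Ppmf)"
proof -
  have B0: "0 \<le> B" using B[of b0] by simp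
  have Bu: "\<And>w. h w \<le> B" using B abs_le_D1 by blast
  have Bl: "\<And>w. -B \<le> h w" using B abs_le_D2 by (metis minus_le_iff)
  have bh: "bnd h" using B by (auto intro: bnd_I)
  have main: "\<bar>Lim h - (\<integral>w. h w \<partial>measure_pmf Ppmf)\<bar> \<le> 2 * (B * ((1 - eps)^j * 2))" for j
  proof -
    let ?S = "St j"
    define S where "S = (\<Sum>w\<in>?S. h w * pinf w)"
    define D where "D = (1 - eps)^j * 2"
    have D: "1 - D \<le> (\<Sum>w\<in>?S. pinf w)" using pi_St unfolding D_def .
    have h1: "bnd (\<lambda>z. h z * indS ?S z)"
      by (intro bnd_I[where B=B]) (use B B0 in \<open>auto simp: indS_def\<close>)
    have h2: "bnd (\<lambda>z. h z * (1 - indS ?S z))"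
      by (intro bnd_I[where B=B]) (use B B0 in \<open>auto simp: indS_def\<close>)
    have c1: "bnd (\<lambda>z. 1 - indS ?S z)"
      by (intro bnd_I[where B=1]) (auto simp: indS_def)
    have "Lim h = Lim (\<lambda>z. 1 * (h z * indS ?S z) + 1 * (h z * (1 - indS ?S z)))"
      by (rule Lim_cong) (simp add: algebra_simps)
    also have "\<dots> = Lim (\<lambda>z. h z * indS ?S z) + Lim (\<lambda>z. h z * (1 - indS ?S z))"
      using Lim_lin[OF h1 h2, of 1 1] by simp
    finally have L: "Lim h = Lim (\<lambda>z. h z * indS ?S z) + Lim (\<lambda>z. h z * (1 - indS ?S z))" .
    have "Lim (\<lambda>z. h z * indS ?S z) = Lim (\<lambda>z. \<Sum>w\<in>?S. h w * ind w z)"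
      by (rule Lim_cong) (simp add: indS_def ind_def St_finite sum_ind_mult)
    also have "\<dots> = (\<Sum>w\<in>?S. Lim (\<lambda>z. h w * ind w z))"
      by (rule Lim_sum[OF St_finite]) (intro bnd_I[where B="\<bar>h _\<bar>"], auto simp: ind_def)
    also have "\<dots> = (\<Sum>w\<in>?S. h w * Lim (ind w))"
    proof (rule sum.cong[OF refl])
      fix w
      have "Lim (\<lambda>z. h w * ind w z + 0 * ind w z) = h w * Lim (ind w) + 0 * Lim (ind w)"
        by (rule Lim_lin[OF bnd_ind bnd_ind])
      then show "Lim (\<lambda>z. h w * ind w z) = h w * Lim (ind w)" by simp
    qed
    also have "\<dots> = S" unfolding S_def using St_R by (intro sum.cong refl) (auto simp: pinf_def)
    finally have L1: "Lim (\<lambda>z. h z * indS ?S z) = S" .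
    have "Lim (\<lambda>z. 1 - indS ?S z) = 1 - Lim (indS ?S)"
      using Lim_lin[OF bnd_const[of 1] bnd_indS[of "?S"], where a=1 and b="-1"] by (simp add: Lim_const)
    also have "\<dots> \<le> D" using D pi_sum[OF St_finite St_R] by simp
    finally have c1D: "Lim (\<lambda>z. 1 - indS ?S z) \<le> D" .
    have "Lim (\<lambda>z. h z * (1 - indS ?S z)) \<le> Lim (\<lambda>z. B * (1 - indS ?S z) + 0 * 0)"
      by (rule Lim_mono[OF h2]) (use bnd_lin[OF c1 bnd_const[of 0], where a=B and b=0] B in \<open>auto simp: indS_def Bu Bl\<close>)
    also have "\<dots> = B * Lim (\<lambda>z. 1 - indS ?S z)"
      using Lim_lin[OF c1 bnd_const[of 0], where a=B and b=0] by (simp add: Lim_const)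
    finally have up: "Lim (\<lambda>z. h z * (1 - indS ?S z)) \<le> B * Lim (\<lambda>z. 1 - indS ?S z)" .
    have "Lim (\<lambda>z. (-B) * (1 - indS ?S z) + 0 * 0) \<le> Lim (\<lambda>z. h z * (1 - indS ?S z))"
      by (rule Lim_mono[OF _ h2]) (use bnd_lin[OF c1 bnd_const[of 0], where a="-B" and b=0] B in \<open>auto simp: indS_def Bu Bl\<close>)
    moreover have "Lim (\<lambda>z. (-B) * (1 - indS ?S z) + 0 * 0) = (-B) * Lim (\<lambda>z. 1 - indS ?S z)"
      using Lim_lin[OF c1 bnd_const[of 0], where a="-B" and b=0] by (simp add: Lim_const)
    ultimately have lo: "- (B * Lim (\<lambda>z. 1 - indS ?S z)) \<le> Lim (\<lambda>z. h z * (1 - indS ?S z))" by simp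
    have BD: "B * Lim (\<lambda>z. 1 - indS ?S z) \<le> B * D" using c1D B0 by (rule mult_left_mono)
    have LA: "\<bar>Lim h - S\<bar> \<le> B * D" using L L1 up lo BD by (simp add: abs_le_iff)
    let ?P = "measure_pmf Ppmf"
    have ih1: "integrable ?P (\<lambda>z. h z * indS ?S z)"
      by (rule Ppmf_integrable[where B=B]) (use B B0 in \<open>auto simp: indS_def\<close>)
    have ih2: "integrable ?P (\<lambda>z. h z * (1 - indS ?S z))"
      by (rule Ppmf_integrable[where B=B]) (use B B0 in \<open>auto simp: indS_def\<close>)
    have ic: "integrable ?P (\<lambda>z. B * (1 - indS ?S z))"
      by (rule Ppmf_integrable[where B=B]) (use B0 in \<open>auto simp: indS_def\<close>)
    have I1: "(\<integral>z. h z * indS ?S z \<partial>?P) = S"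
      unfolding S_def by (subst integral_measure_pmf_real[where A="?S"]) (auto simp: St_finite indS_def pmf_Ppmf split: if_splits)
    have Iind: "(\<integral>z. indS ?S z \<partial>?P) = (\<Sum>w\<in>?S. pinf w)"
      by (subst integral_measure_pmf_real[where A="?S"]) (auto simp: St_finite indS_def pmf_Ppmf split: if_splits)
    have "(\<integral>z. B * (1 - indS ?S z) \<partial>?P) = B * (1 - (\<integral>z. indS ?S z \<partial>?P))"
      by (simp add: Ppmf_integrable[where B=1] indS_def)
    also have "\<dots> \<le> B * D" using Iind D B0 by (intro mult_left_mono) auto
    finally have icD: "(\<integral>z. B * (1 - indS ?S z) \<partial>?P) \<le> B * D" .
    have "(\<integral>z. h z \<partial>?P) = (\<integral>z. h z * indS ?S z + h z * (1 - indS ?S z) \<partial>?P)"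
      by (simp add: algebra_simps)
    also have "\<dots> = S + (\<integral>z. h z * (1 - indS ?S z) \<partial>?P)"
      using I1 ih1 ih2 by simp
    finally have I: "(\<integral>z. h z \<partial>?P) = S + (\<integral>z. h z * (1 - indS ?S z) \<partial>?P)" .
    have "(\<integral>z. h z * (1 - indS ?S z) \<partial>?P) \<le> (\<integral>z. B * (1 - indS ?S z) \<partial>?P)"
      by (rule integral_mono[OF ih2 ic]) (use B in \<open>auto simp: indS_def Bu Bl\<close>)
    moreover have "- (\<integral>z. B * (1 - indS ?S z) \<partial>?P) \<le> (\<integral>z. h z * (1 - indS ?S z) \<partial>?P)"
    proof -
      have "(\<integral>z. - (B * (1 - indS ?S z)) \<partial>?P) \<le> (\<integral>z. h z * (1 - indS ?S z) \<partial>?P)"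
        by (rule integral_mono[OF _ ih2]) (use B ic in \<open>auto simp: indS_def Bu Bl\<close>)
      then show ?thesis by simp
    qed
    ultimately have IA: "\<bar>(\<integral>z. h z \<partial>?P) - S\<bar> \<le> B * D" using I icD by (simp add: abs_le_iff)
    from LA IA show ?thesis unfolding D_def by (simp add: abs_le_iff)
  qed
  show ?thesis
  proof (rule ccontr)
    assume ne: "Lim h \<noteq> (\<integral>w. h w \<partial>measure_pmf Ppmf)"
    then have "0 < \<bar>Lim h - (\<integral>w. h w \<partial>measure_pmf Ppmf)\<bar>" by simp
    then obtain j where "(1 - eps)^j * (4 * B) < \<bar>Lim h - (\<integral>w. h w \<partial>measure_pmf Ppmf)\<bar>"
      using geom_small by blast
    with main[of j] show False by (simp add: algebra_simps)
  qed
qed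

end

lemma alpha_meas[measurable]: "(\<lambda>z. alpha T M i y z) \<in> borel_measurable borel"
  unfolding alpha_def by measurable

lemma rmap_meas[measurable]: "(\<lambda>z. rmap T M i y z) \<in> borel_measurable borel"
  unfolding rmap_def by (intro borel_measurable_scaleR borel_measurable_divide borel_measurable_const alpha_meas borel_measurable_continuous_onI continuous_intros)

lemma PS_borel[measurable]: "PS \<in> sets (borel :: (real^'x::finite) measure)"
  unfolding PS_def by measurable

lemma space_PSM[simp]: "space PSM = PS"
  by (simp add: PSM_def space_restrict_space)

lemma sets_PSM_iff: "A \<in> sets PSM \<longleftrightarrow> A \<subseteq> PS \<and> A \<in> sets borel"
  unfolding PSM_def by (rule sets_restrict_space_iff) simp

lemma alpha_meas_PSM[measurable]: "(\<lambda>z. alpha T M i y z) \<in> borel_measurable PSM"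
  unfolding PSM_def by (rule measurable_restrict_space1) (rule alpha_meas)

lemma rmap_meas_PSM: "(\<lambda>z. rmap T M i y z) \<in> borel_measurable PSM"
  unfolding PSM_def by (rule measurable_restrict_space1) (rule rmap_meas)

lemma singleton_PSM: "a \<in> PS \<Longrightarrow> {a} \<in> sets PSM"
  by (simp add: sets_PSM_iff)

context hmm begin

definition rm :: "'o \<Rightarrow> 'v \<Rightarrow> real^'x \<Rightarrow> real^'x" where
  "rm i y z = (if 0 < alpha T M i y z then rmap T M i y z else b0)"

lemma rm_PS: "z \<in> PS \<Longrightarrow> rm i y z \<in> PS"
  by (simp add: rm_def rmap_PS b0_PS)

lemma rm_meas: "rm i y \<in> measurable PSM PSM"
proof -
  have "(\<lambda>z. if 0 < alpha T M i y z then rmap T M i y z else b0) \<in> measurable PSM borel"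
  proof (rule measurable_If)
    have "{z \<in> space PSM. 0 < alpha T M i y z} \<in> sets PSM" by measurable
    then show "{z \<in> space PSM. 0 < alpha T M i y z} \<in> sets PSM" .
  qed (auto intro: rmap_meas_PSM)
  then have "rm i y \<in> measurable PSM borel" by (simp add: rm_def[abs_def])
  then have "rm i y \<in> measurable PSM (restrict_space borel PS)"
    by (rule measurable_restrict_space2[rotated]) (auto simp: rm_PS)
  then show ?thesis by (simp add: PSM_def)
qed

lemma Pop_alt: assumes "z \<in> PS" shows "Pop h z = (\<Sum>y\<in>UNIV. alpha T M (g z) y z * h (rm (g z) y z))"
proof -
  have "Pop h z = (\<Sum>y\<in>{y. 0 < alpha T M (g z) y z}. alpha T M (g z) y z * h (rm (g z) y z))"
    unfolding Pop_def by (intro sum.cong) (auto simp: rm_def)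
  also have "\<dots> = (\<Sum>y\<in>UNIV. alpha T M (g z) y z * h (rm (g z) y z))"
    using alpha_nonneg[OF assms] by (intro sum.mono_neutral_left) (auto simp: less_le)
  finally show ?thesis .
qed

lemma g_meas: "g \<in> measurable PSM (count_space UNIV)" by (rule gmeas)

lemma Pop_meas: assumes h: "h \<in> borel_measurable PSM" shows "Pop h \<in> borel_measurable PSM"
proof -
  have mi: "(\<lambda>z. \<Sum>y\<in>UNIV. alpha T M i y z * h (rm i y z)) \<in> borel_measurable PSM" for i
  proof -
    have "(\<lambda>z. h (rm i y z)) \<in> borel_measurable PSM" for y
      using measurable_compose[OF rm_meas h] by (simp add: comp_def)
    then show ?thesis
      by (intro borel_measurable_sum borel_measurable_times alpha_meas_PSM) auto
  qed
  have "(\<lambda>z. (\<lambda>i z. \<Sum>y\<in>UNIV. alpha T M i y z * h (rm i y z)) (g z) z) \<in> borel_measurable PSM"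
    by (rule measurable_compose_countable'[where I=UNIV and f="\<lambda>i z. \<Sum>y\<in>UNIV. alpha T M i y z * h (rm i y z)", OF mi g_meas]) simp
  then show ?thesis
    by (rule measurable_cong[THEN iffD1, rotated]) (simp add: Pop_alt)
qed

lemma Popk_meas: "h \<in> borel_measurable PSM \<Longrightarrow> (Pop^^k) h \<in> borel_measurable PSM"
  by (induction k) (auto intro: Pop_meas)

fun follow :: "('o \<times> 'v) list \<Rightarrow> 'x \<Rightarrow> real^'x" where
  "follow [] x = delta x"
| "follow (p # l) x = rmap T M (fst p) (snd p) (follow l x)"

lemma orbit_follow: "z \<in> orbit T M x \<Longrightarrow> \<exists>l. z = follow l x"
proof (induction rule: orbit.induct)
  case base then show ?case by (intro exI[of _ "[]"]) simp
next
  case (step z i y)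
  then obtain l where "z = follow l x" by blast
  then show ?case by (intro exI[of _ "(i, y) # l"]) simp
qed

lemma Rset_countable: "countable (Rset T M)"
proof -
  have "Rset T M \<subseteq> (\<Union>x. range (\<lambda>l. follow l x))"
  proof
    fix z assume "z \<in> Rset T M"
    then obtain x where "z \<in> orbit T M x" unfolding Rset_def by blast
    then obtain l where "z = follow l x" using orbit_follow by blast
    then show "z \<in> (\<Union>x. range (\<lambda>l. follow l x))" by blast
  qed
  moreover have "countable (\<Union>x. range (\<lambda>l. follow l x))" by auto
  ultimately show ?thesis by (rule countable_subset)
qed

lemma Rset_sets: "Rset T M \<in> sets PSM"
  by (rule sets.countable[OF singleton_PSM Rset_countable]) (use Rset_PS in auto)

end

context hmm begin

definition Nm :: "(real^'x) measure \<Rightarrow> (real^'x) measure" where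
  "Nm \<mu> = distr (density (count_space UNIV \<Otimes>\<^sub>M \<mu>) (\<lambda>(y,z). ennreal (alpha T M (g z) y z)))
            PSM (\<lambda>(y,z). rm (g z) y z)"

lemma meas_mu: "sets \<mu> = sets PSM \<Longrightarrow> measurable \<mu> N = measurable PSM N"
  by (rule measurable_cong_sets) auto

lemma space_mu: "sets \<mu> = sets PSM \<Longrightarrow> space \<mu> = PS"
  by (metis sets_eq_imp_space_eq space_PSM)

lemma rmg_meas: "(\<lambda>z. rm (g z) y z) \<in> measurable PSM PSM"
  by (rule measurable_compose_countable'[where I=UNIV and f="\<lambda>i z. rm i y z", OF rm_meas g_meas]) simp

lemma alg_meas: "(\<lambda>z. alpha T M (g z) y z) \<in> borel_measurable PSM"
  by (rule measurable_compose_countable'[where I=UNIV and f="\<lambda>i z. alpha T M i y z", OF alpha_meas_PSM g_meas]) simp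

lemma alg_meas_enn: "(\<lambda>z. ennreal (alpha T M (g z) y z)) \<in> borel_measurable PSM"
  using alg_meas[of y] by measurable

context
  fixes \<mu> :: "(real^'x) measure"
  assumes mu: "prob_on_PS \<mu>"
begin

lemma mu_sets: "sets \<mu> = sets PSM" using mu by (simp add: prob_on_PS_def)
lemma mu_prob: "prob_space \<mu>" using mu by (simp add: prob_on_PS_def)
lemma mu_space: "space \<mu> = PS" using space_mu[OF mu_sets] .

lemma pair_T_meas: "(\<lambda>(y,z). rm (g z) y z) \<in> measurable (count_space UNIV \<Otimes>\<^sub>M \<mu>) PSM"
  by (rule measurable_pair_measure_countable1) (auto simp: meas_mu[OF mu_sets] rmg_meas)

lemma pair_D_meas: "(\<lambda>(y,z). ennreal (alpha T M (g z) y z)) \<in> borel_measurable (count_space UNIV \<Otimes>\<^sub>M \<mu>)"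
  by (rule measurable_pair_measure_countable1) (auto simp: meas_mu[OF mu_sets] alg_meas_enn)

lemma Nm_sets: "sets (Nm \<mu>) = sets PSM" by (simp add: Nm_def)
lemma Nm_space: "space (Nm \<mu>) = PS" by (simp add: Nm_def)

lemma N_nn:
  assumes f: "f \<in> borel_measurable PSM"
  shows "(\<integral>\<^sup>+w. f w \<partial>Nm \<mu>) = (\<integral>\<^sup>+z. (\<Sum>y\<in>UNIV. ennreal (alpha T M (g z) y z) * f (rm (g z) y z)) \<partial>\<mu>)"
proof -
  interpret sf: sigma_finite_measure \<mu> using prob_space_imp_sigma_finite[OF mu_prob] .
  have fT: "(\<lambda>p. f ((\<lambda>(y,z). rm (g z) y z) p)) \<in> borel_measurable (count_space UNIV \<Otimes>\<^sub>M \<mu>)"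
    using measurable_compose[OF pair_T_meas f] by (simp add: comp_def)
  have "(\<integral>\<^sup>+w. f w \<partial>Nm \<mu>) = (\<integral>\<^sup>+p. f ((\<lambda>(y,z). rm (g z) y z) p) \<partial>density (count_space UNIV \<Otimes>\<^sub>M \<mu>) (\<lambda>(y,z). ennreal (alpha T M (g z) y z)))"
    unfolding Nm_def by (rule nn_integral_distr) (use pair_T_meas f in auto)
  also have "\<dots> = (\<integral>\<^sup>+p. (\<lambda>(y,z). ennreal (alpha T M (g z) y z)) p * f ((\<lambda>(y,z). rm (g z) y z) p) \<partial>(count_space UNIV \<Otimes>\<^sub>M \<mu>))"
    by (rule nn_integral_density[OF pair_D_meas fT])
  also have "\<dots> = (\<integral>\<^sup>+y. \<integral>\<^sup>+z. ennreal (alpha T M (g z) y z) * f (rm (g z) y z) \<partial>\<mu> \<partial>count_space UNIV)"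
  proof -
    have m: "(\<lambda>p. (\<lambda>(y,z). ennreal (alpha T M (g z) y z)) p * f ((\<lambda>(y,z). rm (g z) y z) p)) \<in> borel_measurable (count_space UNIV \<Otimes>\<^sub>M \<mu>)"
      using pair_D_meas fT by (rule borel_measurable_times_ennreal)
    show ?thesis using sf.nn_integral_fst[OF m] by (simp add: split_beta')
  qed
  also have "\<dots> = (\<Sum>y\<in>UNIV. \<integral>\<^sup>+z. ennreal (alpha T M (g z) y z) * f (rm (g z) y z) \<partial>\<mu>)"
    by (rule nn_integral_count_space_finite) simp
  also have "\<dots> = (\<integral>\<^sup>+z. (\<Sum>y\<in>UNIV. ennreal (alpha T M (g z) y z) * f (rm (g z) y z)) \<partial>\<mu>)"
  proof (rule nn_integral_sum[symmetric])
    fix y :: 'v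
    have "(\<lambda>z. f (rm (g z) y z)) \<in> borel_measurable PSM"
      using measurable_compose[OF rmg_meas f] by (simp add: comp_def)
    then show "(\<lambda>z. ennreal (alpha T M (g z) y z) * f (rm (g z) y z)) \<in> borel_measurable \<mu>"
      unfolding meas_mu[OF mu_sets] using alg_meas by measurable
  qed
  finally show ?thesis .
qed

lemma Ftrans_eq: "Ftrans T M g \<mu> = Nm \<mu>"
proof -
  have "Nm \<mu> = measure_of (space (Nm \<mu>)) (sets (Nm \<mu>)) (emeasure (Nm \<mu>))"
    by (simp add: measure_of_of_measure)
  also have "\<dots> = measure_of PS (sets PSM) (emeasure (Nm \<mu>))"
    by (simp add: Nm_sets Nm_space)
  finally have N: "Nm \<mu> = measure_of PS (sets PSM) (emeasure (Nm \<mu>))" .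
  have A: "Ftrans T M g \<mu> = measure_of PS (sets PSM) (emeasure (Nm \<mu>))"
    unfolding Ftrans_def
  proof (rule measure_of_eq)
    show "sets PSM \<subseteq> Pow PS" using sets.space_closed[of PSM] by simp
    fix B :: "(real^'x) set" assume "B \<in> sigma_sets PS (sets PSM)"
    then have B: "B \<in> sets PSM" by (metis space_PSM sets.sigma_sets_eq)
    have iB: "indicator B \<in> borel_measurable PSM" using B by simp
    have "emeasure (Nm \<mu>) B = (\<integral>\<^sup>+w. indicator B w \<partial>Nm \<mu>)"
      using B by (simp add: Nm_sets)
    also have "\<dots> = (\<integral>\<^sup>+z. (\<Sum>y\<in>UNIV. ennreal (alpha T M (g z) y z) * indicator B (rm (g z) y z)) \<partial>\<mu>)"
      by (rule N_nn[OF iB])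
    finally have E: "emeasure (Nm \<mu>) B = \<dots>" .
    have mi: "(\<lambda>z. ennreal (alpha T M i y z) * indicator B (rm i y z) * indicator (g -` {i} \<inter> PS) z) \<in> borel_measurable \<mu>" for i y
    proof -
      have s: "g -` {i} \<inter> PS \<in> sets PSM"
        using measurable_sets[OF g_meas, of "{i}"] by simp
      have "(\<lambda>z. indicator B (rm i y z) :: ennreal) \<in> borel_measurable PSM"
        by (rule measurable_compose[OF rm_meas borel_measurable_indicator[OF B]])
      then show ?thesis unfolding meas_mu[OF mu_sets] using s by measurable
    qed
    have "(\<Sum>i\<in>UNIV. \<Sum>y\<in>UNIV. set_nn_integral \<mu> (g -` {i} \<inter> PS) (\<lambda>z. ennreal (alpha T M i y z) * indicator B (rmap T M i y z)))
        = (\<Sum>i\<in>UNIV. \<Sum>y\<in>UNIV. \<integral>\<^sup>+z. ennreal (alpha T M i y z) * indicator B (rm i y z) * indicator (g -` {i} \<inter> PS) z \<partial>\<mu>)"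
    proof (intro sum.cong refl nn_integral_cong)
      fix i y z
      show "ennreal (alpha T M i y z) * indicator B (rmap T M i y z) * indicator (g -` {i} \<inter> PS) z
          = ennreal (alpha T M i y z) * indicator B (rm i y z) * indicator (g -` {i} \<inter> PS) z"
        by (cases "0 < alpha T M i y z") (auto simp: rm_def ennreal_neg)
    qed
    also have "\<dots> = (\<Sum>i\<in>UNIV. \<integral>\<^sup>+z. (\<Sum>y\<in>UNIV. ennreal (alpha T M i y z) * indicator B (rm i y z) * indicator (g -` {i} \<inter> PS) z) \<partial>\<mu>)"
      by (intro sum.cong refl nn_integral_sum[symmetric] mi)
    also have "\<dots> = (\<integral>\<^sup>+z. (\<Sum>i\<in>UNIV. \<Sum>y\<in>UNIV. ennreal (alpha T M i y z) * indicator B (rm i y z) * indicator (g -` {i} \<inter> PS) z) \<partial>\<mu>)"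
      by (rule nn_integral_sum[symmetric]) (intro borel_measurable_sum mi)
    also have "\<dots> = (\<integral>\<^sup>+z. (\<Sum>y\<in>UNIV. ennreal (alpha T M (g z) y z) * indicator B (rm (g z) y z)) \<partial>\<mu>)"
    proof (rule nn_integral_cong)
      fix z assume z: "z \<in> space \<mu>"
      then have zPS: "z \<in> PS" using mu_space by simp
      have "(\<Sum>i\<in>UNIV. \<Sum>y\<in>UNIV. ennreal (alpha T M i y z) * indicator B (rm i y z) * indicator (g -` {i} \<inter> PS) z)
          = (\<Sum>i\<in>UNIV. if g z = i then (\<Sum>y\<in>UNIV. ennreal (alpha T M i y z) * indicator B (rm i y z)) else 0)"
        using zPS by (intro sum.cong refl) (auto simp: indicator_def)
      also have "\<dots> = (\<Sum>y\<in>UNIV. ennreal (alpha T M (g z) y z) * indicator B (rm (g z) y z))"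
        by simp
      finally show "(\<Sum>i\<in>UNIV. \<Sum>y\<in>UNIV. ennreal (alpha T M i y z) * indicator B (rm i y z) * indicator (g -` {i} \<inter> PS) z)
          = (\<Sum>y\<in>UNIV. ennreal (alpha T M (g z) y z) * indicator B (rm (g z) y z))" .
    qed
    finally show "(\<Sum>i\<in>UNIV. \<Sum>y\<in>UNIV. set_nn_integral \<mu> (g -` {i} \<inter> PS) (\<lambda>z. ennreal (alpha T M i y z) * indicator B (rmap T M i y z)))
        = emeasure (Nm \<mu>) B" using E by simp
  qed
  show ?thesis by (rule trans[OF A N[symmetric]])
qed

lemma Nm_prob: "prob_space (Nm \<mu>)"
proof (rule prob_spaceI)
  have "emeasure (Nm \<mu>) (space (Nm \<mu>)) = (\<integral>\<^sup>+w. 1 \<partial>Nm \<mu>)" by simp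
  also have "\<dots> = (\<integral>\<^sup>+z. (\<Sum>y\<in>UNIV. ennreal (alpha T M (g z) y z) * 1) \<partial>\<mu>)"
    by (rule N_nn) simp
  also have "\<dots> = (\<integral>\<^sup>+z. 1 \<partial>\<mu>)"
  proof (rule nn_integral_cong)
    fix z assume "z \<in> space \<mu>"
    then have z: "z \<in> PS" using mu_space by simp
    show "(\<Sum>y\<in>UNIV. ennreal (alpha T M (g z) y z) * 1) = 1"
      using alpha_nonneg[OF z] alpha_sum[OF z] by simp
  qed
  also have "\<dots> = 1" using prob_space.emeasure_space_1[OF mu_prob] by simp
  finally show "emeasure (Nm \<mu>) (space (Nm \<mu>)) = 1" .
qed

lemma Ftrans_prob: "prob_on_PS (Ftrans T M g \<mu>)"
  unfolding Ftrans_eq prob_on_PS_def using Nm_sets Nm_prob by simp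

end

lemma int_shift:
  fixes h :: "'a \<Rightarrow> real"
  assumes P: "prob_space N" and hm: "h \<in> borel_measurable N" and B: "\<And>z. z \<in> space N \<Longrightarrow> \<bar>h z\<bar> \<le> B"
  shows "(\<integral>z. h z \<partial>N) = enn2real (\<integral>\<^sup>+z. ennreal (h z + B) \<partial>N) - B"
proof -
  interpret P: prob_space N by (rule P)
  have int: "integrable N h"
    by (rule P.integrable_const_bound[where B=B]) (use B hm in auto)
  have "(\<integral>z. h z + B \<partial>N) = (\<integral>z. h z \<partial>N) + B"
    using int by (simp add: P.prob_space)
  moreover have "(\<integral>z. h z + B \<partial>N) = enn2real (\<integral>\<^sup>+z. ennreal (h z + B) \<partial>N)"
  proof (rule integral_eq_nn_integral)
    show "(\<lambda>z. h z + B) \<in> borel_measurable N" using hm by simp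
    show "AE z in N. 0 \<le> h z + B" by (intro AE_I2) (auto dest!: B simp: abs_le_iff)
  qed
  ultimately show ?thesis by simp
qed

lemma Ftrans_int:
  assumes mu: "prob_on_PS \<mu>" and hm: "h \<in> borel_measurable PSM" and B: "\<And>z. z \<in> PS \<Longrightarrow> \<bar>h z\<bar> \<le> B"
  shows "(\<integral>w. h w \<partial>Ftrans T M g \<mu>) = (\<integral>z. Pop h z \<partial>\<mu>)"
proof -
  have PB: "\<bar>Pop h z\<bar> \<le> B" if "z \<in> PS" for z
  proof -
    have "-B \<le> (Pop^^1) h z \<and> (Pop^^1) h z \<le> B"
      by (rule Popk_bounds[OF that]) (auto dest!: B simp: abs_le_iff)
    then show ?thesis by (simp add: abs_le_iff)
  qed
  have hB: "\<And>w. w \<in> PS \<Longrightarrow> 0 \<le> h w + B" using B by (fastforce simp: abs_le_iff)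
  have "(\<integral>w. h w \<partial>Ftrans T M g \<mu>) = enn2real (\<integral>\<^sup>+w. ennreal (h w + B) \<partial>Nm \<mu>) - B"
    unfolding Ftrans_eq[OF mu]
    by (rule int_shift[OF Nm_prob[OF mu]]) (use hm B in \<open>auto simp: meas_mu[OF Nm_sets[OF mu]] Nm_space[OF mu]\<close>)
  also have "(\<integral>\<^sup>+w. ennreal (h w + B) \<partial>Nm \<mu>) = (\<integral>\<^sup>+z. (\<Sum>y\<in>UNIV. ennreal (alpha T M (g z) y z) * ennreal (h (rm (g z) y z) + B)) \<partial>\<mu>)"
    by (rule N_nn[OF mu]) (use hm in measurable)
  also have "\<dots> = (\<integral>\<^sup>+z. ennreal (Pop h z + B) \<partial>\<mu>)"
  proof (rule nn_integral_cong)
    fix z assume "z \<in> space \<mu>"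
    then have z: "z \<in> PS" using mu_space[OF mu] by simp
    have "(\<Sum>y\<in>UNIV. ennreal (alpha T M (g z) y z) * ennreal (h (rm (g z) y z) + B))
        = (\<Sum>y\<in>UNIV. ennreal (alpha T M (g z) y z * (h (rm (g z) y z) + B)))"
      using alpha_nonneg[OF z] hB[OF rm_PS[OF z]] by (intro sum.cong refl) (simp add: ennreal_mult)
    also have "\<dots> = ennreal (\<Sum>y\<in>UNIV. alpha T M (g z) y z * (h (rm (g z) y z) + B))"
      using alpha_nonneg[OF z] hB[OF rm_PS[OF z]] by (intro sum_ennreal) simp
    also have "(\<Sum>y\<in>UNIV. alpha T M (g z) y z * (h (rm (g z) y z) + B)) = Pop h z + B"
    proof -
      have "(\<Sum>y\<in>UNIV. alpha T M (g z) y z * (h (rm (g z) y z) + B))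
          = (\<Sum>y\<in>UNIV. alpha T M (g z) y z * h (rm (g z) y z) + B * alpha T M (g z) y z)"
        by (intro sum.cong) (simp_all add: algebra_simps)
      also have "\<dots> = (\<Sum>y\<in>UNIV. alpha T M (g z) y z * h (rm (g z) y z)) + B * (\<Sum>y\<in>UNIV. alpha T M (g z) y z)"
        by (simp add: sum.distrib sum_distrib_left)
      finally show ?thesis using alpha_sum[OF z] Pop_alt[OF z] by simp
    qed
    finally show "(\<Sum>y\<in>UNIV. ennreal (alpha T M (g z) y z) * ennreal (h (rm (g z) y z) + B)) = ennreal (Pop h z + B)" .
  qed
  finally have L: "(\<integral>w. h w \<partial>Ftrans T M g \<mu>) = enn2real (\<integral>\<^sup>+z. ennreal (Pop h z + B) \<partial>\<mu>) - B" .
  have "(\<integral>z. Pop h z \<partial>\<mu>) = enn2real (\<integral>\<^sup>+z. ennreal (Pop h z + B) \<partial>\<mu>) - B"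
    by (rule int_shift[OF mu_prob[OF mu]]) (use Pop_meas[OF hm] PB in \<open>auto simp: meas_mu[OF mu_sets[OF mu]] mu_space[OF mu]\<close>)
  with L show ?thesis by simp
qed

end

lemma PS_closed: "closed (PS :: (real^'x::finite) set)"
proof -
  have "PS = (\<Inter>j. {z::real^'x. 0 \<le> z $ j}) \<inter> {z. (\<Sum>j\<in>UNIV. z $ j) = 1}"
    by (auto simp: PS_def)
  also have "closed \<dots>"
    by (intro closed_Int closed_INT ballI closed_Collect_le closed_Collect_eq continuous_intros)
  finally show ?thesis .
qed

lemma PS_bounded: "bounded (PS :: (real^'x::finite) set)"
proof -
  have "PS \<subseteq> cbox (0::real^'x) (\<chi> j. 1)"
  proof (rule subsetI)
    fix z :: "real^'x" assume z: "z \<in> PS"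
    have "z $ j \<le> 1" for j
    proof -
      have "z $ j \<le> (\<Sum>k\<in>UNIV. z $ k)" using z by (intro member_le_sum) (auto simp: PS_def)
      then show ?thesis using z by (simp add: PS_def)
    qed
    then show "z \<in> cbox 0 (\<chi> j. 1)" using z by (simp add: mem_box_cart PS_def)
  qed
  then show ?thesis by (rule bounded_subset[OF bounded_cbox])
qed

lemma PS_compact: "compact (PS :: (real^'x::finite) set)"
  using PS_closed PS_bounded by (simp add: compact_eq_bounded_closed)

lemma cont_bounded: assumes "continuous_on PS (f :: real^'x::finite \<Rightarrow> real)" shows "\<exists>B. \<forall>z\<in>PS. \<bar>f z\<bar> \<le> B"
proof -
  have "compact (f ` PS)" by (rule compact_continuous_image[OF assms PS_compact])
  then have "bounded (f ` PS)" by (rule compact_imp_bounded)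
  then show ?thesis by (auto simp: bounded_real)
qed

lemma prob_int_bound:
  fixes g :: "'a \<Rightarrow> real"
  assumes P: "prob_space N" and gm: "g \<in> borel_measurable N" and B: "\<And>z. z \<in> space N \<Longrightarrow> \<bar>g z\<bar> \<le> c"
  shows "\<bar>\<integral>z. g z \<partial>N\<bar> \<le> c"
proof -
  interpret P: prob_space N by (rule P)
  have int: "integrable N g"
    by (rule P.integrable_const_bound[where B=c]) (use B gm in auto)
  have "(\<integral>z. g z \<partial>N) \<le> (\<integral>z. c \<partial>N)"
    by (rule integral_mono[OF int]) (auto dest!: B simp: abs_le_iff)
  moreover have "(\<integral>z. - c \<partial>N) \<le> (\<integral>z. g z \<partial>N)"
    by (rule integral_mono[OF _ int]) (auto dest!: B simp: abs_le_iff)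
  ultimately show ?thesis by (simp add: P.prob_space abs_le_iff)
qed

context hmm begin

definition proj :: "real^'x \<Rightarrow> real^'x" where "proj z = (if z \<in> PS then z else b0)"

definition muinf :: "(real^'x) measure" where "muinf = distr (measure_pmf Ppmf) PSM proj"

lemma proj_PS: "proj z \<in> PS" by (simp add: proj_def b0_PS)

lemma proj_meas: "proj \<in> measurable (measure_pmf Ppmf) PSM"
  using proj_PS by simp

lemma muinf_sets: "sets muinf = sets PSM" by (simp add: muinf_def)

lemma muinf_prob_space: "prob_space muinf"
  unfolding muinf_def by (rule measure_pmf.prob_space_distr[OF proj_meas])

lemma muinf_prob: "prob_on_PS muinf"
  by (simp add: prob_on_PS_def muinf_sets muinf_prob_space)

lemma muinf_int:
  assumes hm: "h \<in> borel_measurable PSM" and B: "\<And>z. z \<in> PS \<Longrightarrow> \<bar>h z\<bar> \<le> B"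
  shows "(\<integral>z. h z \<partial>muinf) = Lim h"
proof -
  have "(\<integral>z. h z \<partial>muinf) = (\<integral>z. h (proj z) \<partial>measure_pmf Ppmf)"
    unfolding muinf_def by (rule integral_distr[OF proj_meas hm])
  also have "\<dots> = Lim (\<lambda>z. h (proj z))"
    by (rule Lim_pmf[symmetric, where B=B]) (rule B[OF proj_PS])
  also have "\<dots> = Lim h" by (rule Lim_cong) (simp add: proj_def)
  finally show ?thesis .
qed

lemma muinf_R: "emeasure muinf (Rset T M) = 1"
proof -
  have "emeasure muinf (Rset T M) = emeasure (measure_pmf Ppmf) (proj -` Rset T M \<inter> space (measure_pmf Ppmf))"
    unfolding muinf_def by (rule emeasure_distr[OF proj_meas Rset_sets])
  also have "\<dots> = 1"
  proof (rule measure_pmf.emeasure_eq_1_AE)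
    show "AE x in measure_pmf Ppmf. x \<in> proj -` Rset T M \<inter> space (measure_pmf Ppmf)"
      unfolding AE_measure_pmf_iff using set_Ppmf Rset_PS by (auto simp: proj_def)
  qed simp
  finally show ?thesis .
qed

lemma muinf_inv: "Ftrans T M g muinf = muinf"
proof (rule measure_eqI)
  show "sets (Ftrans T M g muinf) = sets muinf"
    using Ftrans_prob[OF muinf_prob] muinf_sets by (simp add: prob_on_PS_def)
  fix A assume "A \<in> sets (Ftrans T M g muinf)"
  then have A: "A \<in> sets PSM" using Ftrans_prob[OF muinf_prob] by (simp add: prob_on_PS_def)
  have FP: "prob_space (Ftrans T M g muinf)" using Ftrans_prob[OF muinf_prob] by (simp add: prob_on_PS_def)
  have sF: "space (Ftrans T M g muinf) = PS"
    using Ftrans_prob[OF muinf_prob] by (simp add: prob_on_PS_def space_mu)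
  have sI: "space muinf = PS" by (simp add: muinf_def)
  have AS: "A \<subseteq> PS" using A by (simp add: sets_PSM_iff)
  have im: "(indicator A :: real^'x \<Rightarrow> real) \<in> borel_measurable PSM" using A by simp
  have iB: "\<And>z. z \<in> PS \<Longrightarrow> \<bar>(indicator A z :: real)\<bar> \<le> 1" by (simp add: indicator_def)
  have bi: "bnd (indicator A :: real^'x \<Rightarrow> real)" by (rule bnd_I[where B=1]) (rule iB)
  have PB: "\<And>z. z \<in> PS \<Longrightarrow> \<bar>Pop (indicator A) z\<bar> \<le> 1"
  proof -
    fix z :: "real^'x" assume z: "z \<in> PS"
    have "-1 \<le> (Pop^^1) (indicator A) z \<and> (Pop^^1) (indicator A) z \<le> (1::real)"
      by (rule Popk_bounds[OF z]) (auto simp: indicator_def)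
    then show "\<bar>Pop (indicator A) z\<bar> \<le> 1" by (simp add: abs_le_iff)
  qed
  have "measure (Ftrans T M g muinf) A = (\<integral>z. indicator A z \<partial>Ftrans T M g muinf)"
    using AS sF by (simp add: Int_absorb2)
  also have "\<dots> = (\<integral>z. Pop (indicator A) z \<partial>muinf)"
    by (rule Ftrans_int[OF muinf_prob im iB])
  also have "\<dots> = Lim (Pop (indicator A))"
    by (rule muinf_int[OF Pop_meas[OF im] PB])
  also have "\<dots> = Lim (indicator A)" by (rule Lim_Pop[OF bi])
  also have "\<dots> = (\<integral>z. indicator A z \<partial>muinf)" by (rule muinf_int[OF im iB, symmetric])
  also have "\<dots> = measure muinf A" using AS sI by (simp add: Int_absorb2)
  finally have "measure (Ftrans T M g muinf) A = measure muinf A" .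
  then show "emeasure (Ftrans T M g muinf) A = emeasure muinf A"
    using finite_measure.emeasure_eq_measure[OF prob_space.axioms(1)[OF FP]] finite_measure.emeasure_eq_measure[OF prob_space.axioms(1)[OF muinf_prob_space]] by simp
qed

lemma iter_prob: "prob_on_PS \<mu>0 \<Longrightarrow> prob_on_PS ((Ftrans T M g ^^ t) \<mu>0)"
  by (induction t) (auto intro: Ftrans_prob)

lemma iter_int:
  assumes mu0: "prob_on_PS \<mu>0"
  shows "h \<in> borel_measurable PSM \<Longrightarrow> (\<And>z. z \<in> PS \<Longrightarrow> \<bar>h z\<bar> \<le> B) \<Longrightarrow>
     (\<integral>z. h z \<partial>(Ftrans T M g ^^ t) \<mu>0) = (\<integral>z. (Pop^^t) h z \<partial>\<mu>0)"
proof (induction t arbitrary: h)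
  case 0 then show ?case by simp
next
  case (Suc t)
  have PB: "\<bar>Pop h z\<bar> \<le> B" if "z \<in> PS" for z
  proof -
    have "-B \<le> (Pop^^1) h z \<and> (Pop^^1) h z \<le> B"
      by (rule Popk_bounds[OF that]) (auto dest!: Suc.prems(2) simp: abs_le_iff)
    then show ?thesis by (simp add: abs_le_iff)
  qed
  have "(\<integral>z. h z \<partial>(Ftrans T M g ^^ Suc t) \<mu>0) = (\<integral>z. Pop h z \<partial>(Ftrans T M g ^^ t) \<mu>0)"
    using Ftrans_int[OF iter_prob[OF mu0] Suc.prems] by simp
  also have "\<dots> = (\<integral>z. (Pop^^t) (Pop h) z \<partial>\<mu>0)"
    by (rule Suc.IH[OF Pop_meas[OF Suc.prems(1)] PB])
  also have "\<dots> = (\<integral>z. (Pop^^Suc t) h z \<partial>\<mu>0)"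
    by (simp add: funpow_Suc_right del: funpow.simps)
  finally show ?case .
qed

lemma weak_conv: assumes mu0: "prob_on_PS \<mu>0" shows "weak_conv_PS (\<lambda>t. (Ftrans T M g ^^ t) \<mu>0) muinf"
  unfolding weak_conv_PS_def
proof (intro allI impI)
  fix f :: "real^'x \<Rightarrow> real" assume fc: "continuous_on PS f"
  obtain B where B: "\<And>z. z \<in> PS \<Longrightarrow> \<bar>f z\<bar> \<le> B" using cont_bounded[OF fc] by blast
  have fm: "f \<in> borel_measurable PSM"
    unfolding PSM_def by (rule borel_measurable_continuous_on_restrict[OF fc])
  have bf: "bnd f" by (rule bnd_I[where B=B]) (rule B)
  have P0: "prob_space \<mu>0" and S0: "sets \<mu>0 = sets PSM" using mu0 by (auto simp: prob_on_PS_def)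
  have sp0: "space \<mu>0 = PS" by (rule space_mu[OF S0])
  interpret PP: prob_space \<mu>0 by (rule P0)
  have lim: "(\<integral>z. f z \<partial>muinf) = Lim f" by (rule muinf_int[OF fm B])
  show "(\<lambda>t. \<integral>z. f z \<partial>(Ftrans T M g ^^ t) \<mu>0) \<longlonglongrightarrow> (\<integral>z. f z \<partial>muinf)"
    unfolding lim LIMSEQ_def dist_real_def
  proof (intro allI impI)
    fix r :: real assume r: "0 < r"
    obtain N where N: "\<And>t z. N \<le> t \<Longrightarrow> z \<in> PS \<Longrightarrow> \<bar>(Pop^^t) f z - Lim f\<bar> < r/2"
      using conv_unif[OF bf, of "r/2"] r by auto
    show "\<exists>no. \<forall>n\<ge>no. \<bar>(\<integral>z. f z \<partial>(Ftrans T M g ^^ n) \<mu>0) - Lim f\<bar> < r"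
    proof (intro exI allI impI)
      fix t assume t: "N \<le> t"
      have "(\<integral>z. f z \<partial>(Ftrans T M g ^^ t) \<mu>0) = (\<integral>z. (Pop^^t) f z \<partial>\<mu>0)"
        by (rule iter_int[OF mu0 fm B])
      also have "\<dots> = (\<integral>z. (Pop^^t) f z - Lim f \<partial>\<mu>0) + Lim f"
      proof -
        have int: "integrable \<mu>0 ((Pop^^t) f)"
        proof (rule PP.integrable_const_bound[where B=B])
          show "AE x in \<mu>0. norm ((Pop^^t) f x) \<le> B"
          proof (rule AE_I2)
            fix x assume "x \<in> space \<mu>0"
            then have x: "x \<in> PS" using sp0 by simp
            have "-B \<le> (Pop^^t) f x \<and> (Pop^^t) f x \<le> B"
              by (rule Popk_bounds[OF x]) (auto dest!: B simp: abs_le_iff)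
            then show "norm ((Pop^^t) f x) \<le> B" by (simp add: abs_le_iff)
          qed
          show "(Pop^^t) f \<in> borel_measurable \<mu>0" using Popk_meas[OF fm] by (simp add: meas_mu[OF S0])
        qed
        then show ?thesis using P0 by (simp add: prob_space.prob_space)
      qed
      finally have eq: "(\<integral>z. f z \<partial>(Ftrans T M g ^^ t) \<mu>0) - Lim f = (\<integral>z. (Pop^^t) f z - Lim f \<partial>\<mu>0)" by simp
      have "\<bar>\<integral>z. (Pop^^t) f z - Lim f \<partial>\<mu>0\<bar> \<le> r/2"
      proof (rule prob_int_bound[OF P0])
        show "(\<lambda>z. (Pop^^t) f z - Lim f) \<in> borel_measurable \<mu>0"
          using Popk_meas[OF fm] by (simp add: meas_mu[OF S0])
        fix z assume "z \<in> space \<mu>0"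
        then show "\<bar>(Pop^^t) f z - Lim f\<bar> \<le> r/2" using N[OF t] sp0 by (simp add: less_imp_le)
      qed
      then show "\<bar>(\<integral>z. f z \<partial>(Ftrans T M g ^^ t) \<mu>0) - Lim f\<bar> < r" using eq r by simp
    qed
  qed
qed

lemma main: "\<exists>\<mu>inf. prob_on_PS \<mu>inf \<and> emeasure \<mu>inf (Rset T M) = 1 \<and>
           Ftrans T M g \<mu>inf = \<mu>inf \<and>
           (\<forall>\<mu>0. prob_on_PS \<mu>0 \<longrightarrow> weak_conv_PS (\<lambda>t. (Ftrans T M g ^^ t) \<mu>0) \<mu>inf)"
  using muinf_prob muinf_R muinf_inv weak_conv by blast

end

theorem theorem2p24:
  fixes T :: "'x::finite \<Rightarrow> 'x \<Rightarrow> real"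
    and M :: "'o::finite \<Rightarrow> 'x \<Rightarrow> 'v::finite \<Rightarrow> real"
    and g :: "real^'x \<Rightarrow> 'o"
  assumes "stochastic_model T M"
    and "positive_model T"
    and "anchored_model T M"
    and "g \<in> measurable PSM (count_space UNIV)"
    and "restricted_irreducible T M g"
    and "restricted_aperiodic T M g"
  shows "\<exists>\<mu>inf. prob_on_PS \<mu>inf \<and> emeasure \<mu>inf (Rset T M) = 1 \<and>
           Ftrans T M g \<mu>inf = \<mu>inf \<and>
           (\<forall>\<mu>0. prob_on_PS \<mu>0 \<longrightarrow> weak_conv_PS (\<lambda>t. (Ftrans T M g ^^ t) \<mu>0) \<mu>inf)"
proof -
  interpret hmm T M g using assms by (unfold_locales)
  show ?thesis by (rule main)
qed


end
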